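(* (1) For $n\geq 1$, a $2$-null CRC in $G_n$ with covering radius $\rho\geq 2$, $c_1=1$ and $c_2=3$ exists if and only if $n=2$; in that case its parameter matrix is $[0,4|1,0,3|3,0,1|4,0]$ (realized by the set of even-weight words of a perfect code in $G_2$). (2) For no $n\geq 1$ is there a $2$-null CRC in $G_n$ with covering radius $\rho\geq 2$, $c_1=2$ and $c_2=3$.
   Context: $G_n$: vertex set $\mathbb{Z}^n$, $x\sim y$ iff $\sum_i|x_i-y_i|=1$; weight of $x$ is $\sum_i|x_i|$. For a code $C$ with covering radius $\rho=\max_v d(v,C)$, $C_i=\{v:d(v,C)=i\}$. $C$ is a CRC if for all $i,j$ every vertex of $C_i$ has the same number $\alpha_{ij}$ of neighbours in $C_j$, with $\alpha_{ij}=0$ for $|i-j|>1$; $a_i=\alpha_{ii}$, $b_i=\alpha_{i,i+1}$, $c_i=\alpha_{i,i-1}$, parameter matrix written $[a_0,b_0|c_1,a_1,b_1|\ldots|c_\rho,a_\rho]$. $C$ is $r$-null if $a_0=\cdots=a_{r-1}=0$. A perfect code in $G_n$ is a vertex set meeting every closed ball of radius one in exactly one vertex. *)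

theory Defs
  imports Main
begin

text \<open>Vertices of G_n: integer vectors of length n, represented as functions
  nat => int vanishing outside the index set {0..<n}.\<close>
definition vert :: "nat \<Rightarrow> (nat \<Rightarrow> int) set" where
  "vert n = {x. \<forall>i\<ge>n. x i = 0}"

definition gdist :: "nat \<Rightarrow> (nat \<Rightarrow> int) \<Rightarrow> (nat \<Rightarrow> int) \<Rightarrow> nat" where
  "gdist n x y = nat (\<Sum>i<n. \<bar>x i - y i\<bar>)"

definition adj :: "nat \<Rightarrow> (nat \<Rightarrow> int) \<Rightarrow> (nat \<Rightarrow> int) \<Rightarrow> bool" where
  "adj n x y \<longleftrightarrow> (\<Sum>i<n. \<bar>x i - y i\<bar>) = 1"

definition weight :: "nat \<Rightarrow> (nat \<Rightarrow> int) \<Rightarrow> nat" where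
  "weight n x = nat (\<Sum>i<n. \<bar>x i\<bar>)"

definition dcode :: "nat \<Rightarrow> (nat \<Rightarrow> int) set \<Rightarrow> (nat \<Rightarrow> int) \<Rightarrow> nat" where
  "dcode n C v = Inf (gdist n v ` C)"

definition covering_radius :: "nat \<Rightarrow> (nat \<Rightarrow> int) set \<Rightarrow> nat \<Rightarrow> bool" where
  "covering_radius n C \<rho> \<longleftrightarrow> C \<noteq> {} \<and> C \<subseteq> vert n \<and>
     (\<forall>v\<in>vert n. dcode n C v \<le> \<rho>) \<and> (\<exists>v\<in>vert n. dcode n C v = \<rho>)"

definition layer :: "nat \<Rightarrow> (nat \<Rightarrow> int) set \<Rightarrow> nat \<Rightarrow> (nat \<Rightarrow> int) set" where
  "layer n C i = {v \<in> vert n. dcode n C v = i}"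

definition is_CRC :: "nat \<Rightarrow> (nat \<Rightarrow> int) set \<Rightarrow> nat \<Rightarrow> (nat \<Rightarrow> nat \<Rightarrow> nat) \<Rightarrow> bool" where
  "is_CRC n C \<rho> \<alpha> \<longleftrightarrow> covering_radius n C \<rho> \<and>
     (\<forall>i\<le>\<rho>. \<forall>j\<le>\<rho>. \<forall>v\<in>layer n C i.
        card {u \<in> vert n. adj n v u \<and> u \<in> layer n C j} = \<alpha> i j) \<and>
     (\<forall>i\<le>\<rho>. \<forall>j\<le>\<rho>. (i > j + 1 \<or> j > i + 1) \<longrightarrow> \<alpha> i j = 0)"

definition r_null :: "nat \<Rightarrow> (nat \<Rightarrow> nat \<Rightarrow> nat) \<Rightarrow> bool" where
  "r_null r \<alpha> \<longleftrightarrow> (\<forall>i<r. \<alpha> i i = 0)"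

definition perfect_code :: "nat \<Rightarrow> (nat \<Rightarrow> int) set \<Rightarrow> bool" where
  "perfect_code n P \<longleftrightarrow> P \<subseteq> vert n \<and>
     (\<forall>v\<in>vert n. \<exists>!u. u \<in> P \<and> gdist n v u \<le> 1)"

text \<open>The parameter matrix [0,4|1,0,3|3,0,1|4,0] (covering radius 3).
  a_i = alpha i i, b_i = alpha i (i+1), c_i = alpha i (i-1).\<close>
definition matrix_0413 :: "nat \<Rightarrow> (nat \<Rightarrow> nat \<Rightarrow> nat) \<Rightarrow> bool" where
  "matrix_0413 \<rho> \<alpha> \<longleftrightarrow> \<rho> = 3 \<and>
     \<alpha> 0 0 = 0 \<and> \<alpha> 0 1 = 4 \<and>
     \<alpha> 1 0 = 1 \<and> \<alpha> 1 1 = 0 \<and> \<alpha> 1 2 = 3 \<and>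
     \<alpha> 2 1 = 3 \<and> \<alpha> 2 2 = 0 \<and> \<alpha> 2 3 = 1 \<and>
     \<alpha> 3 2 = 4 \<and> \<alpha> 3 3 = 0"

end

theory Submission
  imports Defs "HOL-Library.Function_Algebras"
begin


definition e :: "nat \<Rightarrow> int \<Rightarrow> nat \<Rightarrow> int" where "e i s = (\<lambda>k. if k = i then s else 0)"
lemma e_apply[simp]: "e i s k = (if k = i then s else 0)" by (simp add: e_def)

lemma e_neg: "e i (-s) = - e i s" by (auto simp: fun_eq_iff)

lemma neqI: "f k \<noteq> g k \<Longrightarrow> f \<noteq> g" by auto

lemma vert_add: "x \<in> vert n \<Longrightarrow> i < n \<Longrightarrow> x + e i s \<in> vert n"
  by (auto simp: vert_def)

lemma sum_abs_e: "i < n \<Longrightarrow> (\<Sum>k<n. \<bar>(e i s) k\<bar>) = \<bar>s\<bar>"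
proof -
  assume i: "i < n"
  have "(\<Sum>k<n. \<bar>(e i s) k\<bar>) = (\<Sum>k<n. if k = i then \<bar>s\<bar> else 0)"
    by (rule sum.cong) auto
  also have "\<dots> = \<bar>s\<bar>" using i by (simp add: sum.delta)
  finally show ?thesis .
qed

lemma adj_sym: "adj n x y = adj n y x"
  by (simp add: adj_def abs_minus_commute)

lemma adj_add: "i < n \<Longrightarrow> \<bar>s\<bar> = 1 \<Longrightarrow> adj n x (x + e i s)"
proof -
  assume "i < n" "\<bar>s\<bar> = 1"
  have "(\<Sum>k<n. \<bar>x k - (x + e i s) k\<bar>) = (\<Sum>k<n. \<bar>(e i s) k\<bar>)"
    by (rule sum.cong) auto
  thus ?thesis using sum_abs_e[OF \<open>i<n\<close>] \<open>\<bar>s\<bar> = 1\<close> by (simp add: adj_def)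
qed

lemma adj_add': "i < n \<Longrightarrow> \<bar>s\<bar> = 1 \<Longrightarrow> adj n (x + e i s) x"
  using adj_add adj_sym by metis

lemma adj_cases:
  assumes "adj n x y" "x \<in> vert n" "y \<in> vert n"
  shows "\<exists>i<n. \<exists>s. (s = 1 \<or> s = -1) \<and> y = x + e i s"
proof -
  define d where "d k = y k - x k" for k
  have S: "(\<Sum>k<n. \<bar>d k\<bar>) = 1" using assms(1) by (simp add: adj_def d_def abs_minus_commute)
  have "\<exists>i<n. d i \<noteq> 0"
  proof (rule ccontr)
    assume "\<not> ?thesis"
    hence "(\<Sum>k<n. \<bar>d k\<bar>) = 0" by simp
    thus False using S by simp
  qed
  then obtain i where i: "i < n" "d i \<noteq> 0" by blast
  have "(\<Sum>k<n. \<bar>d k\<bar>) = \<bar>d i\<bar> + (\<Sum>k\<in>{..<n}-{i}. \<bar>d k\<bar>)"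
    using i by (simp add: sum.remove)
  moreover have "(\<Sum>k\<in>{..<n}-{i}. \<bar>d k\<bar>) \<ge> 0" by (rule sum_nonneg) simp
  moreover have "\<bar>d i\<bar> \<ge> 1" using i by simp
  ultimately have di: "\<bar>d i\<bar> = 1" and R: "(\<Sum>k\<in>{..<n}-{i}. \<bar>d k\<bar>) = 0" using S by linarith+
  have z: "d k = 0" if "k \<noteq> i" for k
  proof (cases "k < n")
    case True
    have "\<bar>d k\<bar> = 0" using R sum_nonneg_eq_0_iff[of "{..<n}-{i}" "\<lambda>k. \<bar>d k\<bar>"] True that by simp
    thus ?thesis by simp
  next
    case False thus ?thesis using assms(2,3) by (simp add: d_def vert_def)
  qed
  have "y = x + e i (d i)"
  proof
    fix k show "y k = (x + e i (d i)) k" using z[of k] by (cases "k = i") (auto simp: d_def)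
  qed
  moreover have "d i = 1 \<or> d i = -1" using di by linarith
  ultimately show ?thesis using i by blast
qed

definition nbrs :: "nat \<Rightarrow> (nat \<Rightarrow> int) \<Rightarrow> (nat \<Rightarrow> int) set" where
  "nbrs n v = {w \<in> vert n. adj n v w}"

lemma nbrs_eq: "v \<in> vert n \<Longrightarrow> nbrs n v = (\<lambda>(i,s). v + e i s) ` ({..<n} \<times> {1,-1})"
proof
  assume v: "v \<in> vert n"
  show "nbrs n v \<subseteq> (\<lambda>(i,s). v + e i s) ` ({..<n} \<times> {1,-1})"
  proof
    fix w assume "w \<in> nbrs n v"
    then obtain i s where "i < n" "s = 1 \<or> s = -1" "w = v + e i s"
      using adj_cases[of n v w] v by (auto simp: nbrs_def)
    thus "w \<in> (\<lambda>(i,s). v + e i s) ` ({..<n} \<times> {1,-1})" by force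
  qed
  show "(\<lambda>(i,s). v + e i s) ` ({..<n} \<times> {1,-1}) \<subseteq> nbrs n v"
    using v by (auto simp: nbrs_def vert_add adj_add)
qed

lemma nbrs_finite: "v \<in> vert n \<Longrightarrow> finite (nbrs n v)"
  by (simp add: nbrs_eq)

lemma nbrs_card: "v \<in> vert n \<Longrightarrow> card (nbrs n v) \<le> 2 * n"
proof -
  assume v: "v \<in> vert n"
  have "card (nbrs n v) \<le> card ({..<n} \<times> {1::int,-1})"
    unfolding nbrs_eq[OF v] by (rule card_image_le) simp
  also have "\<dots> = 2 * n" by (simp add: card_cartesian_product)
  finally show ?thesis .
qed

lemma gdist_sym: "gdist n x y = gdist n y x"
  by (simp add: gdist_def abs_minus_commute)

lemma gdist_triangle: "gdist n x z \<le> gdist n x y + gdist n y z"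
proof -
  have "(\<Sum>i<n. \<bar>x i - z i\<bar>) \<le> (\<Sum>i<n. \<bar>x i - y i\<bar> + \<bar>y i - z i\<bar>)"
    by (rule sum_mono) arith
  also have "\<dots> = (\<Sum>i<n. \<bar>x i - y i\<bar>) + (\<Sum>i<n. \<bar>y i - z i\<bar>)" by (simp add: sum.distrib)
  finally have *: "(\<Sum>i<n. \<bar>x i - z i\<bar>) \<le> (\<Sum>i<n. \<bar>x i - y i\<bar>) + (\<Sum>i<n. \<bar>y i - z i\<bar>)" .
  have "(\<Sum>i<n. \<bar>x i - y i\<bar>) \<ge> 0" "(\<Sum>i<n. \<bar>y i - z i\<bar>) \<ge> 0" by (auto intro: sum_nonneg)
  thus ?thesis using * unfolding gdist_def by linarith
qed

lemma gdist_0_iff: "x \<in> vert n \<Longrightarrow> y \<in> vert n \<Longrightarrow> gdist n x y = 0 \<longleftrightarrow> x = y"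
proof
  assume v: "x \<in> vert n" "y \<in> vert n" and g: "gdist n x y = 0"
  have "(\<Sum>i<n. \<bar>x i - y i\<bar>) \<le> 0" using g by (simp add: gdist_def)
  hence "(\<Sum>i<n. \<bar>x i - y i\<bar>) = 0" by (simp add: order_antisym sum_nonneg)
  hence "\<forall>i<n. \<bar>x i - y i\<bar> = 0" by (simp add: sum_nonneg_eq_0_iff)
  thus "x = y" using v by (auto simp: vert_def fun_eq_iff) (metis not_le)
qed (simp add: gdist_def)

lemma adj_gdist: "adj n x y \<longleftrightarrow> gdist n x y = 1"
proof -
  have "(\<Sum>i<n. \<bar>x i - y i\<bar>) \<ge> 0" by (rule sum_nonneg) simp
  thus ?thesis unfolding adj_def gdist_def by linarith
qed

lemma geo_step:
  assumes x: "x \<in> vert n" and z: "z \<in> vert n" and g: "gdist n x z = Suc m"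
  shows "\<exists>w\<in>vert n. adj n x w \<and> gdist n w z = m"
proof -
  have "x \<noteq> z" using g by (auto simp: gdist_def)
  then obtain i where i: "i < n" "x i \<noteq> z i" using x z by (auto simp: vert_def fun_eq_iff) (metis not_le)
  define s where "s = sgn (z i - x i)"
  define w where "w = x + e i s"
  have s1: "\<bar>s\<bar> = 1" using i by (simp add: s_def abs_sgn)
  have wi: "\<bar>w i - z i\<bar> = \<bar>x i - z i\<bar> - 1" using i(2)
    by (auto simp: w_def s_def sgn_if)
  have "(\<Sum>k<n. \<bar>w k - z k\<bar>) = \<bar>w i - z i\<bar> + (\<Sum>k\<in>{..<n}-{i}. \<bar>w k - z k\<bar>)"
    using i by (simp add: sum.remove)
  also have "(\<Sum>k\<in>{..<n}-{i}. \<bar>w k - z k\<bar>) = (\<Sum>k\<in>{..<n}-{i}. \<bar>x k - z k\<bar>)"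
    by (rule sum.cong) (auto simp: w_def)
  also have "(\<Sum>k<n. \<bar>x k - z k\<bar>) = \<bar>x i - z i\<bar> + (\<Sum>k\<in>{..<n}-{i}. \<bar>x k - z k\<bar>)"
    using i by (simp add: sum.remove)
  ultimately have "(\<Sum>k<n. \<bar>w k - z k\<bar>) = (\<Sum>k<n. \<bar>x k - z k\<bar>) - 1" using wi by linarith
  hence "gdist n w z = m" using g by (simp add: gdist_def)
  moreover have "w \<in> vert n" using x i by (simp add: w_def vert_add)
  moreover have "adj n x w" using i s1 by (simp add: w_def adj_add)
  ultimately show ?thesis by blast
qed


lemma dcode_le: "z \<in> C \<Longrightarrow> dcode n C v \<le> gdist n v z"
  unfolding dcode_def Inf_nat_def by (rule Least_le) (rule imageI)

lemma dcode_att: "C \<noteq> {} \<Longrightarrow> \<exists>z\<in>C. dcode n C v = gdist n v z"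
proof -
  assume "C \<noteq> {}"
  hence "dcode n C v \<in> gdist n v ` C" unfolding dcode_def by (intro Inf_nat_def1) auto
  thus ?thesis by auto
qed

lemma e_inj: "s \<noteq> 0 \<Longrightarrow> e i s = e j t \<longleftrightarrow> i = j \<and> s = t"
proof
  assume s: "s \<noteq> 0" and h: "e i s = e j t"
  have "e i s i = e j t i" using h by simp
  hence "i = j" using s by (auto split: if_splits)
  thus "i = j \<and> s = t" using \<open>e i s i = e j t i\<close> by simp
qed simp

lemma add_e_eq: "s \<noteq> 0 \<Longrightarrow> (u + e i s = u + e j t) \<longleftrightarrow> i = j \<and> s = t"
  by (simp add: e_inj)

lemma add_e_neq: "s \<noteq> 0 \<Longrightarrow> (i,s) \<noteq> (j,t) \<Longrightarrow> u + e i s \<noteq> u + e j t"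
  by (simp add: e_inj)

lemma e_add: "e i s + e i t = e i (s + t)" by (auto simp: fun_eq_iff)

locale crc =
  fixes n :: nat and C :: "(nat \<Rightarrow> int) set" and \<rho> :: nat and \<alpha> :: "nat \<Rightarrow> nat \<Rightarrow> nat"
  assumes CRC: "is_CRC n C \<rho> \<alpha>" and nul: "r_null 2 \<alpha>" and rho2: "2 \<le> \<rho>"
begin

abbreviation L where "L i \<equiv> layer n C i"
abbreviation dc where "dc v \<equiv> dcode n C v"

lemma Cne: "C \<noteq> {}" and Cv: "C \<subseteq> vert n" and cov: "\<forall>v\<in>vert n. dc v \<le> \<rho>"
  and covex: "\<exists>v\<in>vert n. dc v = \<rho>"
  using CRC by (auto simp: is_CRC_def covering_radius_def)

lemma a00: "\<alpha> 0 0 = 0" and a11: "\<alpha> 1 1 = 0" using nul by (auto simp: r_null_def)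

lemma count: "v \<in> L i \<Longrightarrow> i \<le> \<rho> \<Longrightarrow> j \<le> \<rho> \<Longrightarrow> card (nbrs n v \<inter> L j) = \<alpha> i j"
proof -
  assume a: "v \<in> L i" "i \<le> \<rho>" "j \<le> \<rho>"
  have "nbrs n v \<inter> L j = {u \<in> vert n. adj n v u \<and> u \<in> L j}" by (auto simp: nbrs_def)
  thus ?thesis using CRC a by (simp add: is_CRC_def)
qed

lemma inL: "v \<in> L i \<longleftrightarrow> v \<in> vert n \<and> dc v = i" by (simp add: layer_def)

lemma count_le: "v \<in> L i \<Longrightarrow> i \<le> \<rho> \<Longrightarrow> j \<le> \<rho> \<Longrightarrow> A \<subseteq> nbrs n v \<inter> L j \<Longrightarrow> card A \<le> \<alpha> i j"
proof -
  assume a: "v \<in> L i" "i \<le> \<rho>" "j \<le> \<rho>" "A \<subseteq> nbrs n v \<inter> L j"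
  have "finite (nbrs n v \<inter> L j)" using a(1) nbrs_finite by (auto simp: inL)
  hence "card A \<le> card (nbrs n v \<inter> L j)" using a(4) by (rule card_mono)
  thus ?thesis using count[OF a(1-3)] by simp
qed

lemma dc0: "v \<in> vert n \<Longrightarrow> dc v = 0 \<longleftrightarrow> v \<in> C"
proof
  assume v: "v \<in> vert n" and d: "dc v = 0"
  obtain z where z: "z \<in> C" "dc v = gdist n v z" using dcode_att[OF Cne] by blast
  hence "v = z" using d v Cv gdist_0_iff[of v n z] by auto
  thus "v \<in> C" using z by simp
next
  assume "v \<in> C" thus "dc v = 0" using dcode_le[of v C n v] by (simp add: gdist_def)
qed

lemma L0: "L 0 = C" using dc0 Cv by (auto simp: inL)

lemma lip: "v \<in> vert n \<Longrightarrow> w \<in> vert n \<Longrightarrow> adj n v w \<Longrightarrow> dc w \<le> dc v + 1"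
proof -
  assume v: "v \<in> vert n" "w \<in> vert n" "adj n v w"
  obtain z where z: "z \<in> C" "dc v = gdist n v z" using dcode_att[OF Cne] by blast
  have "dc w \<le> gdist n w z" using dcode_le[OF z(1)] .
  also have "\<dots> \<le> gdist n w v + gdist n v z" by (rule gdist_triangle)
  also have "gdist n w v = 1" using v(3) by (simp add: adj_gdist gdist_sym)
  finally show ?thesis using z by simp
qed

lemma lip2: "v \<in> vert n \<Longrightarrow> w \<in> vert n \<Longrightarrow> adj n v w \<Longrightarrow> dc v \<le> dc w + 1"
  using lip adj_sym by blast

lemma code_nbr: "x \<in> C \<Longrightarrow> w \<in> vert n \<Longrightarrow> adj n x w \<Longrightarrow> w \<in> L 1"
proof -
  assume a: "x \<in> C" "w \<in> vert n" "adj n x w"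
  have x0: "x \<in> L 0" using a(1) L0 by simp
  have "w \<notin> C"
  proof
    assume "w \<in> C"
    hence "{w} \<subseteq> nbrs n x \<inter> L 0" using a L0 by (auto simp: nbrs_def)
    from count_le[OF x0 _ _ this] a00 show False by simp
  qed
  moreover have "dc x = 0" using dc0 a Cv by auto
  moreover have "dc w \<le> 1" using lip[of x w] a Cv \<open>dc x = 0\<close> by auto
  ultimately show ?thesis using a(2) dc0[of w] by (auto simp: inL)
qed

lemma code_nbr': "z \<in> C \<Longrightarrow> z = y + e m g \<Longrightarrow> m < n \<Longrightarrow> \<bar>g\<bar> = 1 \<Longrightarrow> y \<in> vert n \<Longrightarrow> y \<in> L 1"
  using code_nbr adj_add' by blast

lemma code_nbr2: "y \<in> vert n \<Longrightarrow> z \<in> C \<Longrightarrow> m < n \<Longrightarrow> \<bar>g\<bar> = 1 \<Longrightarrow> z = y + e m g \<Longrightarrow> y \<in> L 1"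
  using code_nbr' by blast

lemma L1_nbr: "v \<in> L 1 \<Longrightarrow> w \<in> vert n \<Longrightarrow> adj n v w \<Longrightarrow> w \<notin> L 1"
proof
  assume a: "v \<in> L 1" "w \<in> vert n" "adj n v w" "w \<in> L 1"
  hence "{w} \<subseteq> nbrs n v \<inter> L 1" by (auto simp: nbrs_def)
  from count_le[OF a(1) _ _ this] a11 rho2 show False by simp
qed

lemma L2_intro: "v \<in> L 1 \<Longrightarrow> w \<in> vert n \<Longrightarrow> adj n v w \<Longrightarrow> w \<notin> C \<Longrightarrow> w \<in> L 2"
proof -
  assume a: "v \<in> L 1" "w \<in> vert n" "adj n v w" "w \<notin> C"
  have "dc w \<le> 2" using lip[of v w] a by (auto simp: inL)
  moreover have "dc w \<noteq> 0" using dc0 a by auto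
  moreover have "dc w \<noteq> 1" using L1_nbr[OF a(1-3)] a(2) by (auto simp: inL)
  ultimately show ?thesis using a(2) by (auto simp: inL)
qed

lemma L2_notC: "u \<in> L 2 \<Longrightarrow> u \<notin> C"
proof
  assume u: "u \<in> L 2" "u \<in> C"
  hence "dc u = 0" using dc0[of u] by (simp add: inL)
  thus False using u by (simp add: inL)
qed

lemma step_down: "v \<in> vert n \<Longrightarrow> dc v = Suc m \<Longrightarrow> \<exists>w\<in>vert n. adj n v w \<and> dc w = m"
proof -
  assume v: "v \<in> vert n" "dc v = Suc m"
  obtain z where z: "z \<in> C" "dc v = gdist n v z" using dcode_att[OF Cne] by blast
  obtain w where w: "w \<in> vert n" "adj n v w" "gdist n w z = m"
    using geo_step[OF v(1), of z m] z v Cv by auto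
  have "dc w \<le> m" using dcode_le[OF z(1), of n w] w by simp
  moreover have "dc v \<le> dc w + 1" using lip2[OF v(1) w(1,2)] .
  ultimately show ?thesis using w v by auto
qed

lemma layer_ex: "k \<le> \<rho> \<Longrightarrow> \<exists>v. v \<in> L k"
proof -
  assume k: "k \<le> \<rho>"
  have "\<forall>v\<in>vert n. dc v = k + d \<longrightarrow> (\<exists>w. w \<in> L k)" for d
  proof (induction d)
    case 0 thus ?case by (auto simp: inL)
  next
    case (Suc d)
    show ?case
    proof (intro ballI impI)
      fix v assume "v \<in> vert n" "dc v = k + Suc d"
      then obtain w where "w \<in> vert n" "dc w = k + d" using step_down[of v "k + d"] by auto
      thus "\<exists>w. w \<in> L k" using Suc by blast
    qed
  qed
  moreover obtain v where "v \<in> vert n" "dc v = \<rho>" using covex by blast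
  ultimately show ?thesis using k by (metis le_add_diff_inverse)
qed

lemma four:
  assumes u: "u \<in> L 2" and c2: "\<alpha> 2 1 = 3"
    and m: "i1 < n" "i2 < n" "i3 < n" "i4 < n"
    and s: "\<bar>s1\<bar> = 1" "\<bar>s2\<bar> = 1" "\<bar>s3\<bar> = 1" "\<bar>s4\<bar> = 1"
    and l: "u + e i1 s1 \<in> L 1" "u + e i2 s2 \<in> L 1" "u + e i3 s3 \<in> L 1" "u + e i4 s4 \<in> L 1"
    and d: "(i1,s1) \<noteq> (i2,s2)" "(i1,s1) \<noteq> (i3,s3)" "(i1,s1) \<noteq> (i4,s4)"
      "(i2,s2) \<noteq> (i3,s3)" "(i2,s2) \<noteq> (i4,s4)" "(i3,s3) \<noteq> (i4,s4)"
  shows False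
proof -
  let ?A = "{u + e i1 s1, u + e i2 s2, u + e i3 s3, u + e i4 s4}"
  have ne: "s1 \<noteq> 0" "s2 \<noteq> 0" "s3 \<noteq> 0" "s4 \<noteq> 0" using s by auto
  have dd: "u + e i1 s1 \<noteq> u + e i2 s2" "u + e i1 s1 \<noteq> u + e i3 s3" "u + e i1 s1 \<noteq> u + e i4 s4"
     "u + e i2 s2 \<noteq> u + e i3 s3" "u + e i2 s2 \<noteq> u + e i4 s4" "u + e i3 s3 \<noteq> u + e i4 s4"
    by (rule add_e_neq[OF ne(1) d(1)] add_e_neq[OF ne(1) d(2)] add_e_neq[OF ne(1) d(3)]
        add_e_neq[OF ne(2) d(4)] add_e_neq[OF ne(2) d(5)] add_e_neq[OF ne(3) d(6)])+
  have "card ?A = 4" using dd by simp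
  moreover have "?A \<subseteq> nbrs n u \<inter> L 1"
  proof -
    have uv: "u \<in> vert n" using u by (simp add: inL)
    have "adj n u (u + e i1 s1)" "adj n u (u + e i2 s2)" "adj n u (u + e i3 s3)" "adj n u (u + e i4 s4)"
      using adj_add m s by blast+
    thus ?thesis using l by (simp add: nbrs_def inL)
  qed
  ultimately have "4 \<le> \<alpha> 2 1" using count_le[OF u rho2 _ , of 1 ?A] rho2 by simp
  thus False using c2 by simp
qed

lemma three_code:
  assumes v: "v \<in> L 1" and c1: "\<alpha> 1 0 \<le> 2"
    and a: "x \<in> C" "y \<in> C" "z \<in> C" "adj n v x" "adj n v y" "adj n v z"
    and d: "x \<noteq> y" "x \<noteq> z" "y \<noteq> z"
  shows False
proof -
  have "{x,y,z} \<subseteq> nbrs n v \<inter> L 0" using a Cv L0 by (auto simp: nbrs_def)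
  from count_le[OF v _ _ this] rho2 d c1 show False by simp
qed

lemma two_code:
  assumes v: "v \<in> L 1" and c1: "\<alpha> 1 0 = 1"
    and a: "x \<in> C" "y \<in> C" "adj n v x" "adj n v y" and d: "x \<noteq> y"
  shows False
proof -
  have "{x,y} \<subseteq> nbrs n v \<inter> L 0" using a Cv L0 by (auto simp: nbrs_def)
  from count_le[OF v _ _ this] rho2 d c1 show False by simp
qed

end


lemma sgn_cases: "\<bar>s::int\<bar> = 1 \<Longrightarrow> s = 1 \<or> s = -1" by linarith

context crc begin

lemma n1_false: assumes "n = 1" "\<alpha> 2 1 = 3" shows False
proof -
  obtain u where u: "u \<in> L 2" using layer_ex rho2 by blast
  have "card (nbrs n u \<inter> L 1) = 3" using count[OF u rho2] rho2 assms by simp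
  moreover have "card (nbrs n u \<inter> L 1) \<le> card (nbrs n u)"
    using u nbrs_finite by (intro card_mono) (auto simp: inL)
  moreover have "u \<in> vert n" using u by (simp add: inL)
  hence "card (nbrs n u) \<le> 2" using nbrs_card[of u n] assms(1) by simp
  ultimately show False by simp
qed

end

locale crc1 = crc +
  assumes c1: "\<alpha> 1 0 = 1" and c2: "\<alpha> 2 1 = 3"
begin

lemma L2_1:
  assumes y: "y \<in> C" and z: "z \<in> C" and zy: "z = y + e i s + e j t"
    and m: "i < n" "j < n" and st: "\<bar>s\<bar> = 1" "\<bar>t\<bar> = 1" and nc: "\<not> (i = j \<and> t = -s)"
  shows False
proof -
  have yv: "y \<in> vert n" using y Cv by auto
  have p1: "y + e i s \<in> L 1" using code_nbr[OF y vert_add[OF yv m(1)]] adj_add[OF m(1) st(1)] by blast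
  have "adj n (y + e i s) y" using adj_add'[OF m(1) st(1)] .
  moreover have "adj n (y + e i s) z" using adj_add[OF m(2) st(2)] zy by simp
  moreover have "y \<noteq> z"
  proof
    assume "y = z"
    hence "y i = z i" by simp
    thus False using zy nc st by (auto split: if_splits)
  qed
  ultimately show False using two_code[OF p1 c1 y z] by blast
qed

lemma diag_L2:
  assumes x: "x \<in> C" and ij: "i \<noteq> j" "i < n" "j < n" and st: "\<bar>s\<bar> = 1" "\<bar>t\<bar> = 1"
  shows "x + e i s + e j t \<in> L 2"
proof -
  have xv: "x \<in> vert n" using x Cv by auto
  have p1: "x + e i s \<in> L 1" using code_nbr[OF x vert_add[OF xv ij(2)]] adj_add[OF ij(2) st(1)] by blast
  show ?thesis
  proof (rule L2_intro[OF p1])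
    show "x + e i s + e j t \<in> vert n" using xv ij by (simp add: vert_add)
    show "adj n (x + e i s) (x + e i s + e j t)" using adj_add[OF ij(3) st(2)] .
    show "x + e i s + e j t \<notin> C" using L2_1[OF x _ refl ij(2,3) st] ij(1) by blast
  qed
qed

lemma L1_from_x: "x \<in> C \<Longrightarrow> i < n \<Longrightarrow> \<bar>s\<bar> = 1 \<Longrightarrow> p = x + e i s \<Longrightarrow> p \<in> L 1"
  using code_nbr[of x p] adj_add[of i n s x] vert_add[of x n i s] Cv by auto

end


context crc1 begin

lemma F1_core:
  assumes x: "x \<in> C" and ij: "i \<noteq> j" "i < n" "j < n" and st: "s = 1 \<or> s = -1" "t = 1 \<or> t = -1"
    and z: "z \<in> C" "z = x + e i s + e j t + e i s + e l d" and ld: "l < n" "d = 1 \<or> d = -1"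
    and n1: "(l,d) \<noteq> (i,-s)" "(l,d) \<noteq> (j,-t)"
  shows "(l,d) = (i,s)"
proof (rule ccontr)
  assume n2: "(l,d) \<noteq> (i,s)"
  have li: "l \<noteq> i" using n1 n2 st ld by auto
  have s1: "\<bar>s\<bar> = 1" "\<bar>t\<bar> = 1" "\<bar>d\<bar> = 1" using st ld by auto
  define u2 where "u2 = x + e i s + e l d"
  have u2: "u2 \<in> L 2" unfolding u2_def using diag_L2[OF x li[symmetric] ij(2) ld(1) s1(1,3)] .
  have u2v: "u2 \<in> vert n" using u2 by (simp add: inL)
  show False
  proof (rule four[OF u2 c2 ld(1) ij(2) ij(2) ij(3) _ _ s1(1) s1(2)])
    show "\<bar>- d\<bar> = 1" "\<bar>- s\<bar> = 1" using s1 by auto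
    show "u2 + e l (- d) \<in> L 1"
      by (rule L1_from_x[OF x ij(2) s1(1)]) (auto simp: u2_def fun_eq_iff)
    show "u2 + e i (- s) \<in> L 1"
      by (rule L1_from_x[OF x ld(1) s1(3)]) (auto simp: u2_def fun_eq_iff)
    show "u2 + e i s \<in> L 1"
      by (rule code_nbr2[OF vert_add[OF u2v ij(2)] z(1) ij(3) s1(2)]) (auto simp: u2_def z(2) fun_eq_iff)
    show "u2 + e j t \<in> L 1"
      by (rule code_nbr2[OF vert_add[OF u2v ij(3)] z(1) ij(2) s1(1)]) (auto simp: u2_def z(2) fun_eq_iff)
    show "(l, - d) \<noteq> (i, - s)" "(l, - d) \<noteq> (i, s)" using li by auto
    show "(l, - d) \<noteq> (j, t)" using n1 by auto
    show "(i, - s) \<noteq> (i, s)" "(i, - s) \<noteq> (j, t)" "(i, s) \<noteq> (j, t)" using st ij by auto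
  qed
qed

end


context crc1 begin

lemma F1:
  assumes x: "x \<in> C" and ij: "i \<noteq> j" "i < n" "j < n" and st: "s = 1 \<or> s = -1" "t = 1 \<or> t = -1"
  shows "x + e i (3*s) + e j t \<in> C \<or> x + e j (3*t) + e i s \<in> C"
proof -
  have xv: "x \<in> vert n" using x Cv by auto
  have s1: "\<bar>s\<bar> = 1" "\<bar>t\<bar> = 1" using st by auto
  define u where "u = x + e i s + e j t"
  have uL2: "u \<in> L 2" unfolding u_def by (rule diag_L2[OF x ij s1])
  have uv: "u \<in> vert n" using uL2 by (simp add: inL)
  have xa: "u + e j (-t) \<in> L 1"
    by (rule L1_from_x[OF x ij(2) s1(1)]) (auto simp: u_def fun_eq_iff)
  have xb: "u + e i (-s) \<in> L 1"
    by (rule L1_from_x[OF x ij(3) s1(2)]) (auto simp: u_def fun_eq_iff)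
  have c3: "card (nbrs n u \<inter> L 1) = 3" using count[OF uL2] rho2 c2 by simp
  obtain w where w: "w \<in> nbrs n u \<inter> L 1" "w \<noteq> u + e j (-t)" "w \<noteq> u + e i (-s)"
  proof -
    have "\<not> nbrs n u \<inter> L 1 \<subseteq> {u + e j (-t), u + e i (-s)}"
    proof
      assume "nbrs n u \<inter> L 1 \<subseteq> {u + e j (-t), u + e i (-s)}"
      hence "card (nbrs n u \<inter> L 1) \<le> card {u + e j (-t), u + e i (-s)}" by (intro card_mono) auto
      also have "\<dots> \<le> 2" by (rule card_insert_le_m1) auto
      finally show False using c3 by simp
    qed
    thus ?thesis using that by blast
  qed
  obtain k c where kc: "k < n" "c = 1 \<or> c = -1" "w = u + e k c"
    using adj_cases[of n u w] w(1) uv by (auto simp: nbrs_def)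
  have kc1: "(k,c) \<noteq> (j,-t)" "(k,c) \<noteq> (i,-s)" using w kc by auto
  have wL1: "w \<in> L 1" using w by simp
  have wv: "w \<in> vert n" using wL1 by (simp add: inL)
  have "card (nbrs n w \<inter> L 0) = 1" using count[OF wL1] rho2 c1 by simp
  then obtain z where z0: "z \<in> nbrs n w \<inter> L 0" by (metis card_1_singletonE insertI1)
  have zC: "z \<in> C" using z0 L0 by auto
  obtain l d where ld: "l < n" "d = 1 \<or> d = -1" "z = w + e l d"
    using adj_cases[of n w z] z0 wv by (auto simp: nbrs_def)
  have s2: "\<bar>c\<bar> = 1" "\<bar>d\<bar> = 1" using kc ld by auto
  have zeq: "z = x + e i s + e j t + e k c + e l d" using ld kc by (simp add: u_def)
  have n1: "(l,d) \<noteq> (k,-c)"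
  proof
    assume "(l,d) = (k,-c)"
    hence "z = u" using zeq by (auto simp: u_def fun_eq_iff)
    thus False using zC L2_notC[OF uL2] by simp
  qed
  have n2: "(l,d) \<noteq> (i,-s)"
  proof
    assume "(l,d) = (i,-s)"
    hence "z = x + e j t + e k c" using zeq by (auto simp: fun_eq_iff)
    thus False using L2_1[OF x zC _ ij(3) kc(1) s1(2) s2(1)] kc1 by auto
  qed
  have n3: "(l,d) \<noteq> (j,-t)"
  proof
    assume "(l,d) = (j,-t)"
    hence "z = x + e i s + e k c" using zeq by (auto simp: fun_eq_iff)
    thus False using L2_1[OF x zC _ ij(2) kc(1) s1(1) s2(1)] kc1 by auto
  qed
  consider "k = i" "c = s" | "k = j" "c = t" | "k \<noteq> i" "k \<noteq> j" using kc1 kc st by auto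
  thus ?thesis
  proof cases
    case 1
    have "(l,d) = (i,s)"
      by (rule F1_core[OF x ij st zC _ ld(1,2) n2 n3]) (simp add: zeq 1)
    hence "z = x + e i (3*s) + e j t" using zeq 1 by (auto simp: fun_eq_iff)
    thus ?thesis using zC by simp
  next
    case 2
    have "(l,d) = (j,t)"
      by (rule F1_core[OF x ij(1)[symmetric] ij(3,2) st(2,1) zC _ ld(1,2) n3 n2])
         (auto simp: zeq 2 fun_eq_iff)
    hence "z = x + e j (3*t) + e i s" using zeq 2 by (auto simp: fun_eq_iff)
    thus ?thesis using zC by simp
  next
    case 3
    show ?thesis
    proof (cases "(l,d) = (j,t)")
      case False
      define u3 where "u3 = x + e i s + e k c"
      have u3: "u3 \<in> L 2" unfolding u3_def using diag_L2[OF x _ ij(2) kc(1) s1(1) s2(1)] 3 by auto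
      have u3v: "u3 \<in> vert n" using u3 by (simp add: inL)
      have False
      proof (rule four[OF u3 c2 kc(1) ij(2) ij(3) ld(1) _ _ s1(2) s2(2)])
        show "\<bar>- c\<bar> = 1" "\<bar>- s\<bar> = 1" using s1 s2 by auto
        show "u3 + e k (- c) \<in> L 1"
          by (rule L1_from_x[OF x ij(2) s1(1)]) (auto simp: u3_def fun_eq_iff)
        show "u3 + e i (- s) \<in> L 1"
          by (rule L1_from_x[OF x kc(1) s2(1)]) (auto simp: u3_def fun_eq_iff)
        have "u3 + e j t = w" by (auto simp: u3_def kc u_def fun_eq_iff)
        thus "u3 + e j t \<in> L 1" using wL1 by simp
        show "u3 + e l d \<in> L 1"
          by (rule code_nbr2[OF vert_add[OF u3v ld(1)] zC ij(3) s1(2)]) (auto simp: u3_def zeq fun_eq_iff)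
        show "(k, - c) \<noteq> (i, - s)" "(k, - c) \<noteq> (j, t)" using 3 by auto
        show "(k, - c) \<noteq> (l, d)" using n1 by auto
        show "(i, - s) \<noteq> (j, t)" using ij by auto
        show "(i, - s) \<noteq> (l, d)" using n2 by auto
        show "(j, t) \<noteq> (l, d)" using False by auto
      qed
      thus ?thesis ..
    next
      case True
      define u4 where "u4 = x + e j t + e k c"
      have u4: "u4 \<in> L 2" unfolding u4_def using diag_L2[OF x _ ij(3) kc(1) s1(2) s2(1)] 3 by auto
      have u4v: "u4 \<in> vert n" using u4 by (simp add: inL)
      have False
      proof (rule four[OF u4 c2 kc(1) ij(3) ij(2) ij(3) _ _ s1(1) s1(2)])
        show "\<bar>- c\<bar> = 1" "\<bar>- t\<bar> = 1" using s1 s2 by auto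
        show "u4 + e k (- c) \<in> L 1"
          by (rule L1_from_x[OF x ij(3) s1(2)]) (auto simp: u4_def fun_eq_iff)
        show "u4 + e j (- t) \<in> L 1"
          by (rule L1_from_x[OF x kc(1) s2(1)]) (auto simp: u4_def fun_eq_iff)
        have "u4 + e i s = w" by (auto simp: u4_def kc u_def fun_eq_iff)
        thus "u4 + e i s \<in> L 1" using wL1 by simp
        show "u4 + e j t \<in> L 1"
          using True by (intro code_nbr2[OF vert_add[OF u4v ij(3)] zC ij(2) s1(1)]) (auto simp: u4_def zeq fun_eq_iff)
        show "(k, - c) \<noteq> (j, - t)" "(k, - c) \<noteq> (i, s)" "(k, - c) \<noteq> (j, t)" using 3 by auto
        show "(j, - t) \<noteq> (i, s)" "(j, - t) \<noteq> (j, t)" "(i, s) \<noteq> (j, t)" using ij st by auto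
      qed
      thus ?thesis ..
    qed
  qed
qed

end


context crc1 begin

lemma F2:
  assumes x: "x \<in> C" and i: "i < n" "j < n" "j' < n" and st: "s = 1 \<or> s = -1" "t = 1 \<or> t = -1" "t' = 1 \<or> t' = -1"
    and q1: "x + e i (3*s) + e j t \<in> C" and q2: "x + e i (3*s) + e j' t' \<in> C"
  shows "(j,t) = (j',t')"
proof (rule ccontr)
  assume ne: "(j,t) \<noteq> (j',t')"
  show False
  proof (rule L2_1[OF q1 q2 _ i(2,3)])
    show "x + e i (3 * s) + e j' t' = x + e i (3 * s) + e j t + e j (- t) + e j' t'"
      by (auto simp: fun_eq_iff)
    show "\<bar>- t\<bar> = 1" "\<bar>t'\<bar> = 1" using st by auto
    show "\<not> (j = j' \<and> t' = - (- t))" using ne by auto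
  qed
qed

lemma n3_false: assumes "3 \<le> n" shows False
proof -
  obtain x where x: "x \<in> C" using Cne by blast
  define Q where "Q i s j t \<longleftrightarrow> x + e i (3*s) + e j t \<in> C" for i j :: nat and s t :: int
  have f1: "Q i s j t \<or> Q j t i s" if "i \<noteq> j" "i < n" "j < n" "s = 1 \<or> s = -1" "t = 1 \<or> t = -1" for i j s t
    using F1[OF x that] by (simp add: Q_def)
  have f2: "Q i s j t \<Longrightarrow> Q i s j' t' \<Longrightarrow> (j,t) = (j',t')"
    if "i < n" "j < n" "j' < n" "s = 1 \<or> s = -1" "t = 1 \<or> t = -1" "t' = 1 \<or> t' = -1" for i j j' s t t'
    using F2[OF x that] by (simp add: Q_def)
  have m: "0 < n" "1 < n" "2 < n" using assms by auto
  have "Q 0 1 1 1 \<or> Q 1 1 0 1" "Q 0 1 1 (-1) \<or> Q 1 (-1) 0 1" "Q 0 1 2 1 \<or> Q 2 1 0 1" "Q 0 1 2 (-1) \<or> Q 2 (-1) 0 1"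
    "Q 0 (-1) 1 1 \<or> Q 1 1 0 (-1)" "Q 0 (-1) 1 (-1) \<or> Q 1 (-1) 0 (-1)" "Q 0 (-1) 2 1 \<or> Q 2 1 0 (-1)" "Q 0 (-1) 2 (-1) \<or> Q 2 (-1) 0 (-1)"
    using m f1[where i=0 and j=1 and s=1 and t=1] f1[where i=0 and j=1 and s=1 and t="-1"] f1[where i=0 and j=2 and s=1 and t=1] f1[where i=0 and j=2 and s=1 and t="-1"] f1[where i=0 and j=1 and s="-1" and t=1] f1[where i=0 and j=1 and s="-1" and t="-1"] f1[where i=0 and j=2 and s="-1" and t=1] f1[where i=0 and j=2 and s="-1" and t="-1"] by auto
  moreover have ex: "\<not> (Q 0 s j t \<and> Q 0 s j' t')"
    if "s = 1 \<or> s = -1" "t = 1 \<or> t = -1" "t' = 1 \<or> t' = -1" "j < n" "j' < n" "(j,t) \<noteq> (j',t')" for s t t' j j'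
    using f2[where i=0 and s=s and j=j and t=t and j'=j' and t'=t'] m that by auto
  moreover have ex2: "\<not> (Q j t 0 1 \<and> Q j t 0 (-1))" if "j = 1 \<or> j = 2" "t = 1 \<or> t = -1" for j t
    using f2[where i=j and s=t and j=0 and t=1 and j'=0 and t'="-1"] m that by auto
  have "\<not> (Q 0 1 1 1 \<and> Q 0 1 1 (-1))" "\<not> (Q 0 1 1 1 \<and> Q 0 1 2 1)" "\<not> (Q 0 1 1 1 \<and> Q 0 1 2 (-1))" "\<not> (Q 0 1 1 (-1) \<and> Q 0 1 2 1)" "\<not> (Q 0 1 1 (-1) \<and> Q 0 1 2 (-1))" "\<not> (Q 0 1 2 1 \<and> Q 0 1 2 (-1))" "\<not> (Q 0 (-1) 1 1 \<and> Q 0 (-1) 1 (-1))" "\<not> (Q 0 (-1) 1 1 \<and> Q 0 (-1) 2 1)" "\<not> (Q 0 (-1) 1 1 \<and> Q 0 (-1) 2 (-1))" "\<not> (Q 0 (-1) 1 (-1) \<and> Q 0 (-1) 2 1)" "\<not> (Q 0 (-1) 1 (-1) \<and> Q 0 (-1) 2 (-1))" "\<not> (Q 0 (-1) 2 1 \<and> Q 0 (-1) 2 (-1))"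
    using m ex[where s="1" and j=1 and t="1" and j'=1 and t'="(-1)"] ex[where s="1" and j=1 and t="1" and j'=2 and t'="1"] ex[where s="1" and j=1 and t="1" and j'=2 and t'="(-1)"] ex[where s="1" and j=1 and t="(-1)" and j'=2 and t'="1"] ex[where s="1" and j=1 and t="(-1)" and j'=2 and t'="(-1)"] ex[where s="1" and j=2 and t="1" and j'=2 and t'="(-1)"] ex[where s="(-1)" and j=1 and t="1" and j'=1 and t'="(-1)"] ex[where s="(-1)" and j=1 and t="1" and j'=2 and t'="1"] ex[where s="(-1)" and j=1 and t="1" and j'=2 and t'="(-1)"] ex[where s="(-1)" and j=1 and t="(-1)" and j'=2 and t'="1"] ex[where s="(-1)" and j=1 and t="(-1)" and j'=2 and t'="(-1)"] ex[where s="(-1)" and j=2 and t="1" and j'=2 and t'="(-1)"] by auto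
  moreover have "\<not> (Q 1 1 0 1 \<and> Q 1 1 0 (-1))" "\<not> (Q 1 (-1) 0 1 \<and> Q 1 (-1) 0 (-1))" "\<not> (Q 2 1 0 1 \<and> Q 2 1 0 (-1))" "\<not> (Q 2 (-1) 0 1 \<and> Q 2 (-1) 0 (-1))"
    using ex2[where j=1 and t="1"] ex2[where j=1 and t="(-1)"] ex2[where j=2 and t="1"] ex2[where j=2 and t="(-1)"] by auto
  ultimately show False by blast
qed

end


context crc begin
lemma L1x: "x \<in> C \<Longrightarrow> i < n \<Longrightarrow> \<bar>s\<bar> = 1 \<Longrightarrow> p = x + e i s \<Longrightarrow> p \<in> L 1"
  using code_nbr[of x p] adj_add[of i n s x] vert_add[of x n i s] Cv by auto
end

locale crc2 = crc +
  assumes c1: "\<alpha> 1 0 = 2" and c2: "\<alpha> 2 1 = 3"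
begin

lemma other_code:
  assumes v: "v \<in> L 1" and x: "x \<in> C" "adj n v x"
  obtains l d where "l < n" "d = 1 \<or> d = -1" "v + e l d \<in> C" "v + e l d \<noteq> x"
proof -
  have vv: "v \<in> vert n" using v by (simp add: inL)
  have c: "card (nbrs n v \<inter> L 0) = 2" using count[OF v] rho2 c1 by simp
  have "\<not> nbrs n v \<inter> L 0 \<subseteq> {x}"
  proof
    assume "nbrs n v \<inter> L 0 \<subseteq> {x}"
    hence "card (nbrs n v \<inter> L 0) \<le> card {x}" by (intro card_mono) auto
    thus False using c by simp
  qed
  then obtain y where y: "y \<in> nbrs n v" "y \<in> C" "y \<noteq> x" using L0 by blast
  obtain l d where "l < n" "d = 1 \<or> d = -1" "y = v + e l d"
    using adj_cases[of n v y] y vv by (auto simp: nbrs_def)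
  thus ?thesis using that y by blast
qed

lemma three_c:
  assumes v: "v \<in> L 1" and a: "x \<in> C" "y \<in> C" "z \<in> C" "adj n v x" "adj n v y" "adj n v z"
    and d: "x \<noteq> y" "x \<noteq> z" "y \<noteq> z"
  shows False using three_code[OF v _ a d] c1 by simp

lemma S4:
  assumes x: "x \<in> C" and i: "i < n" "j < n" "i \<noteq> j" and s: "s = 1 \<or> s = -1"
    and x2: "x + e i (2*s) \<in> C"
  shows False
proof -
  have xv: "x \<in> vert n" using x Cv by auto
  have s1: "\<bar>s\<bar> = 1" using s by auto
  have Y: "x + e j t + e i (-s) \<in> C" if t: "t = 1 \<or> t = -1" for t
  proof (rule ccontr)
    assume nY: "x + e j t + e i (-s) \<notin> C"
    have t1: "\<bar>t\<bar> = 1" using t by auto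
    have xa: "x + e i s \<in> L 1" using L1x[OF x i(1) s1] by simp
    define u where "u = x + e i s + e j t"
    have uv: "u \<in> vert n" using xv i by (simp add: u_def vert_add)
    have unC: "u \<notin> C"
    proof
      assume uC: "u \<in> C"
      show False
      proof (rule three_c[OF xa x x2 uC])
        show "adj n (x + e i s) x" using adj_add'[OF i(1) s1] .
        show "adj n (x + e i s) (x + e i (2 * s))" using adj_add[OF i(1) s1, of "x + e i s"]
          by (simp add: add.assoc e_add)
        show "adj n (x + e i s) u" using adj_add[OF i(2) t1] by (simp add: u_def)
        show "x \<noteq> x + e i (2 * s)" using s by (auto simp: fun_eq_iff)
        show "x \<noteq> u" using t i by (auto simp: fun_eq_iff u_def dest: spec[of _ j])
        show "x + e i (2 * s) \<noteq> u" using t i by (auto simp: fun_eq_iff u_def dest: spec[of _ j])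
      qed
    qed
    have uL2: "u \<in> L 2" using L2_intro[OF xa uv _ unC] adj_add[OF i(2) t1] by (simp add: u_def)
    have xb: "x + e j t \<in> L 1" using L1x[OF x i(2) t1] by simp
    obtain l d where ld: "l < n" "d = 1 \<or> d = -1" "x + e j t + e l d \<in> C" "x + e j t + e l d \<noteq> x"
      using other_code[OF xb x adj_add'[OF i(2) t1]] by blast
    have d1: "\<bar>d\<bar> = 1" using ld by auto
    have n1: "(l,d) \<noteq> (j,-t)"
    proof
      assume "(l,d) = (j,-t)"
      hence "x + e j t + e l d = x" by (auto simp: fun_eq_iff)
      thus False using ld(4) by simp
    qed
    have n2: "(l,d) \<noteq> (i,s)"
    proof
      assume "(l,d) = (i,s)"
      hence "x + e j t + e l d = u" by (auto simp: u_def fun_eq_iff)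
      thus False using ld(3) unC by simp
    qed
    have n3: "(l,d) \<noteq> (i,-s)" using ld(3) nY by auto
    show False
    proof (rule four[OF uL2 c2 i(2) i(1) i(1) ld(1) _ _ s1 d1])
      show "\<bar>- t\<bar> = 1" "\<bar>- s\<bar> = 1" using s1 t1 by auto
      show "u + e j (- t) \<in> L 1" by (rule L1x[OF x i(1) s1]) (auto simp: u_def fun_eq_iff)
      show "u + e i (- s) \<in> L 1" by (rule L1x[OF x i(2) t1]) (auto simp: u_def fun_eq_iff)
      show "u + e i s \<in> L 1"
        by (rule code_nbr2[OF vert_add[OF uv i(1)] x2 i(2), of "-t"]) (auto simp: u_def fun_eq_iff t1)
      show "u + e l d \<in> L 1"
        by (rule code_nbr2[OF vert_add[OF uv ld(1)] ld(3) i(1), of "-s"]) (auto simp: u_def fun_eq_iff s1)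
      show "(j, - t) \<noteq> (i, - s)" "(j, - t) \<noteq> (i, s)" "(i, - s) \<noteq> (i, s)" using i s by auto
      show "(j, - t) \<noteq> (l, d)" "(i, - s) \<noteq> (l, d)" "(i, s) \<noteq> (l, d)" using n1 n2 n3 by auto
    qed
  qed
  have v: "x + e i (-s) \<in> L 1" using L1x[OF x i(1)] s1 by simp
  show False
  proof (rule three_c[OF v x Y[of 1] Y[of "-1"]])
    show "adj n (x + e i (- s)) x" using adj_add'[OF i(1)] s1 by simp
    show "adj n (x + e i (- s)) (x + e j 1 + e i (- s))" using adj_add[OF i(2), of 1 "x + e i (- s)"]
      by (simp add: algebra_simps)
    show "adj n (x + e i (- s)) (x + e j (-1) + e i (- s))" using adj_add[OF i(2), of "-1" "x + e i (- s)"]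
      by (simp add: algebra_simps)
    show "x \<noteq> x + e j 1 + e i (- s)" "x \<noteq> x + e j (- 1) + e i (- s)"
      "x + e j 1 + e i (- s) \<noteq> x + e j (- 1) + e i (- s)"
      using i by (auto simp: fun_eq_iff dest: spec[of _ j])
  qed auto
qed

end


lemma nb2: "n = 2 \<Longrightarrow> v \<in> vert n \<Longrightarrow> d = 1 \<or> d = -1 \<Longrightarrow> z \<in> nbrs n v \<Longrightarrow>
  z = v + e 0 1 \<or> z = v + e 0 (-1) \<or> z = v + e 1 d \<or> z = v + e 1 (-d)"
proof -
  assume a: "n = 2" "v \<in> vert n" "d = 1 \<or> d = -1" "z \<in> nbrs n v"
  then obtain m g where "m < 2" "g = 1 \<or> g = -1" "z = v + e m g"
    using adj_cases[of n v z] by (auto simp: nbrs_def)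
  moreover have "m = 0 \<or> m = 1" using \<open>m < 2\<close> by auto
  ultimately show ?thesis using a(3) by auto
qed

context crc2 begin

lemma n3_false: assumes n3: "3 \<le> n" shows False
proof -
  obtain x where x: "x \<in> C" using Cne by blast
  have xv: "x \<in> vert n" using x Cv by auto
  have m: "0 < n" "1 < n" "2 < n" using n3 by auto
  have xa: "x + e 0 1 \<in> L 1" using L1x[OF x m(1)] by simp
  obtain l d where ld: "l < n" "d = 1 \<or> d = -1" "x + e 0 1 + e l d \<in> C" "x + e 0 1 + e l d \<noteq> x"
    using other_code[OF xa x adj_add'[OF m(1)]] by auto
  have d1: "\<bar>d\<bar> = 1" using ld by auto
  have l0: "l \<noteq> 0"
  proof
    assume l: "l = 0"
    show False
    proof (cases "d = 1")
      case True
      hence "x + e 0 (2*1) \<in> C" using ld(3) l by (simp add: add.assoc e_add)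
      thus False using S4[OF x m(1) m(2) _ , of 1] by simp
    next
      case False
      hence "x + e 0 1 + e l d = x" using ld(2) l by (auto simp: fun_eq_iff)
      thus False using ld(4) by simp
    qed
  qed
  obtain k where k: "k < n" "k \<noteq> 0" "k \<noteq> l"
  proof (cases "l = 1")
    case True thus ?thesis using that[of 2] m by auto
  next
    case False thus ?thesis using that[of 1] m by auto
  qed
  have Y: "x + e k c + e 0 (-1) \<in> C" if c: "c = 1 \<or> c = -1" for c
  proof (rule ccontr)
    assume nY: "x + e k c + e 0 (-1) \<notin> C"
    have c1: "\<bar>c\<bar> = 1" using c by auto
    define u where "u = x + e 0 1 + e k c"
    have uv: "u \<in> vert n" using xv k m by (simp add: u_def vert_add)
    have unC: "u \<notin> C"
    proof
      assume uC: "u \<in> C"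
      show False
      proof (rule three_c[OF xa x ld(3) uC])
        show "adj n (x + e 0 1) x" using adj_add'[OF m(1)] by simp
        show "adj n (x + e 0 1) (x + e 0 1 + e l d)" using adj_add[OF ld(1) d1] .
        show "adj n (x + e 0 1) u" using adj_add[OF k(1) c1] by (simp add: u_def)
        show "x \<noteq> x + e 0 1 + e l d" using ld(4) by metis
        show "x \<noteq> u" using c k by (auto simp: fun_eq_iff u_def dest: spec[of _ k])
        show "x + e 0 1 + e l d \<noteq> u" unfolding u_def by (rule add_e_neq) (use d1 k in auto)
      qed
    qed
    have uL2: "u \<in> L 2" using L2_intro[OF xa uv _ unC] adj_add[OF k(1) c1] by (simp add: u_def)
    have xc: "x + e k c \<in> L 1" using L1x[OF x k(1) c1] by simp
    obtain mm g where mg: "mm < n" "g = 1 \<or> g = -1" "x + e k c + e mm g \<in> C" "x + e k c + e mm g \<noteq> x"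
      using other_code[OF xc x adj_add'[OF k(1) c1]] by blast
    have g1: "\<bar>g\<bar> = 1" using mg by auto
    have n1: "(mm,g) \<noteq> (k,-c)"
    proof
      assume "(mm,g) = (k,-c)"
      hence "x + e k c + e mm g = x" by (auto simp: fun_eq_iff)
      thus False using mg(4) by simp
    qed
    have n2: "(mm,g) \<noteq> (k,c)"
    proof
      assume "(mm,g) = (k,c)"
      hence "x + e k (2*c) \<in> C" using mg(3) by (simp add: add.assoc e_add)
      thus False using S4[OF x k(1) m(1) k(2) c] by simp
    qed
    have n3: "(mm,g) \<noteq> (0,1)"
    proof
      assume "(mm,g) = (0,1)"
      hence "x + e k c + e mm g = u" by (auto simp: fun_eq_iff u_def)
      thus False using mg(3) unC by simp
    qed
    have n4: "(mm,g) \<noteq> (0,-1)" using nY mg(3) by auto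
    have n5: "(mm,g) \<noteq> (l,d)"
    proof
      assume eq: "(mm,g) = (l,d)"
      have xl: "x + e l d \<in> L 1" using L1x[OF x ld(1) d1] by simp
      show False
      proof (rule three_c[OF xl x ld(3) mg(3)])
        show "adj n (x + e l d) x" using adj_add'[OF ld(1) d1] .
        show "adj n (x + e l d) (x + e 0 1 + e l d)" using adj_add[OF m(1), of 1 "x + e l d"]
          by (simp add: algebra_simps)
        show "adj n (x + e l d) (x + e k c + e mm g)" using adj_add[OF k(1) c1, of "x + e l d"] eq
          by (simp add: algebra_simps)
        show "x \<noteq> x + e 0 1 + e l d" using ld(4) by metis
        show "x \<noteq> x + e k c + e mm g" using mg(4) by metis
        show "x + e 0 1 + e l d \<noteq> x + e k c + e mm g"
          using eq k by (auto simp: fun_eq_iff dest: spec[of _ 0])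
      qed
    qed
    show False
    proof (rule four[OF uL2 c2 k(1) m(1) ld(1) mg(1) _ _ d1 g1])
      show "\<bar>- c\<bar> = 1" "\<bar>- 1\<bar> = (1::int)" using c1 by auto
      show "u + e k (- c) \<in> L 1" by (rule L1x[OF x m(1), of 1]) (auto simp: u_def fun_eq_iff)
      show "u + e 0 (- 1) \<in> L 1" by (rule L1x[OF x k(1) c1]) (auto simp: u_def fun_eq_iff)
      show "u + e l d \<in> L 1"
        by (rule code_nbr2[OF vert_add[OF uv ld(1)] ld(3) k(1), of "-c"]) (auto simp: u_def fun_eq_iff c1)
      show "u + e mm g \<in> L 1"
        by (rule code_nbr2[OF vert_add[OF uv mg(1)] mg(3) m(1), of "-1"]) (auto simp: u_def fun_eq_iff)
      show "(k, - c) \<noteq> (0, - 1)" "(k, - c) \<noteq> (l, d)" using k by auto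
      show "(k, - c) \<noteq> (mm, g)" using n1 by auto
      show "(0, - 1) \<noteq> (l, d)" using l0 by auto
      show "(0::nat, - 1) \<noteq> (mm, g)" using n4 by auto
      show "(l, d) \<noteq> (mm, g)" using n5 by auto
    qed
  qed
  have v: "x + e 0 (-1) \<in> L 1" using L1x[OF x m(1)] by simp
  show False
  proof (rule three_c[OF v x Y[of 1] Y[of "-1"]])
    show "adj n (x + e 0 (- 1)) x" using adj_add'[OF m(1)] by simp
    show "adj n (x + e 0 (- 1)) (x + e k 1 + e 0 (- 1))" using adj_add[OF k(1), of 1 "x + e 0 (- 1)"]
      by (simp add: algebra_simps)
    show "adj n (x + e 0 (- 1)) (x + e k (-1) + e 0 (- 1))" using adj_add[OF k(1), of "-1" "x + e 0 (- 1)"]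
      by (simp add: algebra_simps)
    show "x \<noteq> x + e k 1 + e 0 (- 1)" "x \<noteq> x + e k (- 1) + e 0 (- 1)"
      "x + e k 1 + e 0 (- 1) \<noteq> x + e k (- 1) + e 0 (- 1)"
      using k by (auto simp: fun_eq_iff dest: spec[of _ k])
  qed auto
qed

end


context crc2 begin

lemma n2_false: assumes n2: "n = 2" shows False
proof -
  obtain x where x: "x \<in> C" using Cne by blast
  have xv: "x \<in> vert n" using x Cv by auto
  have m: "0 < n" "1 < n" using n2 by auto
  have xa: "x + e 0 1 \<in> L 1" using L1x[OF x m(1)] by simp
  obtain l d where ld: "l < n" "d = 1 \<or> d = -1" "x + e 0 1 + e l d \<in> C" "x + e 0 1 + e l d \<noteq> x"
    using other_code[OF xa x adj_add'[OF m(1)]] by auto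
  have d1: "\<bar>d\<bar> = 1" "\<bar>-d\<bar> = 1" using ld by auto
  have l0: "l \<noteq> 0"
  proof
    assume l: "l = 0"
    show False
    proof (cases "d = 1")
      case True
      hence "x + e 0 (2*1) \<in> C" using ld(3) l by (simp add: add.assoc e_add)
      thus False using S4[OF x m(1) m(2) _ , of 1] by simp
    next
      case False
      hence "x + e 0 1 + e l d = x" using ld(2) l by (auto simp: fun_eq_iff)
      thus False using ld(4) by simp
    qed
  qed
  hence l1: "l = 1" using ld(1) n2 by auto
  define y where "y = x + e 0 1 + e 1 d"
  have yC: "y \<in> C" using ld(3) l1 by (simp add: y_def)
  define q where "q = x + e 0 1 + e 1 (-d)"
  have qv: "q \<in> vert n" using xv m by (simp add: q_def vert_add)
  have qnC: "q \<notin> C"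
  proof
    assume qC: "q \<in> C"
    show False
    proof (rule three_c[OF xa x yC qC])
      show "adj n (x + e 0 1) x" using adj_add'[OF m(1)] by simp
      show "adj n (x + e 0 1) y" using adj_add[OF m(2) d1(1)] by (simp add: y_def)
      show "adj n (x + e 0 1) q" using adj_add[OF m(2) d1(2)] by (simp add: q_def)
      show "x \<noteq> y" using ld(4) l1 by (simp add: y_def)
      show "x \<noteq> q" by (auto simp: fun_eq_iff q_def dest: spec[of _ 0])
      show "y \<noteq> q" using ld(2) by (auto simp: fun_eq_iff q_def y_def dest: spec[of _ 1])
    qed
  qed
  have qL2: "q \<in> L 2" using L2_intro[OF xa qv _ qnC] adj_add[OF m(2) d1(2)] by (simp add: q_def)
  define p where "p = x + e 0 2 + e 1 (-2*d)"
  have q1: "q + e 1 d \<in> L 1" by (rule L1x[OF x m(1), of 1]) (auto simp: q_def fun_eq_iff)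
  have q2: "q + e 0 (-1) \<in> L 1" by (rule L1x[OF x m(2) d1(2)]) (auto simp: q_def fun_eq_iff)
  have x2a: "x + e 0 2 \<notin> C" using S4[OF x m(1) m(2) _, of 1] by auto
  have x2b: "x + e 1 (-2*d) \<notin> C" using S4[OF x m(2) m(1) _, of "-d"] ld(2) by auto
  have pC: "p \<in> C"
  proof -
    have c3: "card (nbrs n q \<inter> L 1) = 3" using count[OF qL2] rho2 c2 by simp
    obtain w where w: "w \<in> nbrs n q \<inter> L 1" "w \<noteq> q + e 1 d" "w \<noteq> q + e 0 (-1)"
    proof -
      have "\<not> nbrs n q \<inter> L 1 \<subseteq> {q + e 1 d, q + e 0 (-1)}"
      proof
        assume "nbrs n q \<inter> L 1 \<subseteq> {q + e 1 d, q + e 0 (-1)}"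
        hence "card (nbrs n q \<inter> L 1) \<le> card {q + e 1 d, q + e 0 (-1)}" by (intro card_mono) auto
        also have "\<dots> \<le> 2" by (rule card_insert_le_m1) auto
        finally show False using c3 by simp
      qed
      thus ?thesis using that by blast
    qed
    have wL1: "w \<in> L 1" using w by simp
    have wv: "w \<in> vert n" using wL1 by (simp add: inL)
    have cw: "card (nbrs n w \<inter> L 0) = 2" using count[OF wL1] rho2 c1 by simp
    have w2: "w = q + e 0 1 \<or> w = q + e 1 (-d)"
      using nb2[OF n2 qv ld(2), of w] w by auto
    show ?thesis
    proof (rule ccontr)
      assume pn: "p \<notin> C"
      obtain A where A: "nbrs n w \<inter> L 0 \<subseteq> {A}"
      proof (cases "w = q + e 0 1")
        case True
        have "nbrs n w \<inter> L 0 \<subseteq> {w + e 0 1}"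
        proof
          fix z assume z: "z \<in> nbrs n w \<inter> L 0"
          hence zC: "z \<in> C" using L0 by auto
          have "z = w + e 0 1 \<or> z = w + e 0 (-1) \<or> z = w + e 1 d \<or> z = w + e 1 (-d)"
            using nb2[OF n2 wv ld(2), of z] z by auto
          moreover have "w + e 0 (-1) = q" using True by (auto simp: fun_eq_iff)
          moreover have "w + e 1 d = x + e 0 2" using True by (auto simp: fun_eq_iff q_def)
          moreover have "w + e 1 (-d) = p" using True by (auto simp: fun_eq_iff q_def p_def)
          ultimately show "z \<in> {w + e 0 1}" using zC qnC x2a pn by auto
        qed
        thus ?thesis using that by blast
      next
        case False
        hence F: "w = q + e 1 (-d)" using w2 by simp
        have "nbrs n w \<inter> L 0 \<subseteq> {w + e 1 (-d)}"
        proof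
          fix z assume z: "z \<in> nbrs n w \<inter> L 0"
          hence zC: "z \<in> C" using L0 by auto
          have "z = w + e 0 1 \<or> z = w + e 0 (-1) \<or> z = w + e 1 d \<or> z = w + e 1 (-d)"
            using nb2[OF n2 wv ld(2), of z] z by auto
          moreover have "w + e 1 d = q" using F by (auto simp: fun_eq_iff)
          moreover have "w + e 0 (-1) = x + e 1 (-2*d)" using F by (auto simp: fun_eq_iff q_def)
          moreover have "w + e 0 1 = p" using F by (auto simp: fun_eq_iff q_def p_def)
          ultimately show "z \<in> {w + e 1 (-d)}" using zC qnC x2b pn by auto
        qed
        thus ?thesis using that by blast
      qed
      have "card (nbrs n w \<inter> L 0) \<le> card {A}" using A by (intro card_mono) auto
      thus False using cw by simp
    qed
  qed
  show False
  proof (rule four[OF qL2 c2 m(2) m(1) m(1) m(2) d1(1) _ _ d1(2) q1 q2])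
    show "\<bar>- 1\<bar> = (1::int)" "\<bar>1\<bar> = (1::int)" by auto
    show "q + e 0 1 \<in> L 1"
      by (rule code_nbr2[OF vert_add[OF qv m(1)] pC m(2) d1(2)]) (auto simp: q_def p_def fun_eq_iff)
    show "q + e 1 (- d) \<in> L 1"
      by (rule code_nbr2[where g=1, OF vert_add[OF qv m(2)] pC m(1)]) (auto simp: q_def p_def fun_eq_iff)
    show "(1::nat, d) \<noteq> (0, - 1)" "(1::nat, d) \<noteq> (0, 1)" "(1::nat, d) \<noteq> (1, - d)" using ld(2) by auto
    show "(0::nat, - 1) \<noteq> (0, 1::int)" "(0::nat, - 1) \<noteq> (1, - d)" "(0::nat, 1) \<noteq> (1, - d)" by auto
  qed
qed

lemma false_any: "1 \<le> n \<Longrightarrow> False"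
proof -
  assume "1 \<le> n"
  hence "n = 1 \<or> n = 2 \<or> 3 \<le> n" by auto
  thus False using n1_false c2 n2_false n3_false by blast
qed

end


lemma gd2: "gdist 2 u v = nat (\<bar>u 0 - v 0\<bar> + \<bar>u 1 - v 1\<bar>)"
  by (simp add: gdist_def numeral_2_eq_2 lessThan_Suc)

lemma nbrs2: "v \<in> vert 2 \<Longrightarrow> nbrs 2 v = {v + e 0 1, v + e 0 (-1), v + e 1 1, v + e 1 (-1)}"
proof
  assume v: "v \<in> vert 2"
  show "nbrs 2 v \<subseteq> {v + e 0 1, v + e 0 (-1), v + e 1 1, v + e 1 (-1)}"
    using nb2[of 2 v 1] v by auto
  show "{v + e 0 1, v + e 0 (-1), v + e 1 1, v + e 1 (-1)} \<subseteq> nbrs 2 v"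
    using v by (auto simp: nbrs_def vert_add adj_add)
qed

lemma card_nbrs2: "v \<in> vert 2 \<Longrightarrow> card (nbrs 2 v) = 4"
proof -
  assume v: "v \<in> vert 2"
  have d: "v + e 0 1 \<noteq> v + e 0 (-1)" "v + e 0 1 \<noteq> v + e 1 1" "v + e 0 1 \<noteq> v + e 1 (-1)"
    "v + e 0 (-1) \<noteq> v + e 1 1" "v + e 0 (-1) \<noteq> v + e 1 (-1)" "v + e 1 1 \<noteq> v + e 1 (-1)"
    by (rule add_e_neq; simp)+
  show ?thesis using d by (simp add: nbrs2[OF v])
qed

context crc1 begin

lemma sep: assumes x: "x \<in> C" and y: "y \<in> C" and ne: "x \<noteq> y" shows "4 \<le> gdist n x y"
proof (rule ccontr)
  assume "\<not> 4 \<le> gdist n x y"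
  hence "gdist n x y = 0 \<or> gdist n x y = 1 \<or> gdist n x y = 2 \<or> gdist n x y = 3" by auto
  moreover have xv: "x \<in> vert n" and yv: "y \<in> vert n" using x y Cv by auto
  moreover have "gdist n x y \<noteq> 0" using gdist_0_iff[OF xv yv] ne by simp
  moreover have "gdist n x y \<noteq> 1"
  proof
    assume "gdist n x y = 1"
    hence "y \<in> L 1" using code_nbr[OF x yv] by (simp add: adj_gdist)
    thus False using y dc0[OF yv] by (simp add: inL)
  qed
  moreover have "gdist n x y \<noteq> 2"
  proof
    assume "gdist n x y = 2"
    then obtain p where p: "p \<in> vert n" "adj n x p" "gdist n p y = 1"
      using geo_step[OF xv yv, of 1] by auto
    have "p \<in> L 1" using code_nbr[OF x p(1,2)] .
    thus False using two_code[OF _ c1 x y _ _ ne] p adj_sym by (simp add: adj_gdist) blast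
  qed
  moreover have "gdist n x y \<noteq> 3"
  proof
    assume "gdist n x y = 3"
    then obtain p where p: "p \<in> vert n" "adj n x p" "gdist n p y = 2"
      using geo_step[OF xv yv, of 2] by auto
    then obtain q where q: "q \<in> vert n" "adj n p q" "gdist n q y = 1"
      using geo_step[OF p(1) yv, of 1] by auto
    have pL: "p \<in> L 1" using code_nbr[OF x p(1,2)] .
    have "q \<in> L 1" using code_nbr[OF y q(1)] q(3) by (simp add: adj_gdist gdist_sym)
    thus False using L1_nbr[OF pL q(1,2)] by simp
  qed
  ultimately show False by blast
qed

end

locale crc1n2 = crc1 +
  assumes n2: "n = 2"
begin

lemma pinwheel:
  assumes x: "x \<in> C"
  shows "\<exists>\<sigma>. (\<sigma> = 1 \<or> \<sigma> = -1) \<and> x + e 0 3 + e 1 \<sigma> \<in> C \<and> x + e 0 (-1) + e 1 (3*\<sigma>) \<in> C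
     \<and> x + e 0 (-3) + e 1 (-\<sigma>) \<in> C \<and> x + e 0 1 + e 1 (-3*\<sigma>) \<in> C"
proof -
  have m: "0 < n" "1 < n" using n2 by auto
  define R where "R s t \<longleftrightarrow> x + e 0 (3*s) + e 1 t \<in> C" for s t :: int
  define S where "S t s \<longleftrightarrow> x + e 1 (3*t) + e 0 s \<in> C" for s t :: int
  have f1: "R s t \<or> S t s" if "s = 1 \<or> s = -1" "t = 1 \<or> t = -1" for s t
    using F1[of x 0 1 s t] x m that by (simp add: R_def S_def)
  have f2: "\<not> (R s 1 \<and> R s (-1))" if "s = 1 \<or> s = -1" for s
    using F2[of x 0 1 1 s 1 "-1"] x m that by (auto simp: R_def)
  have f3: "\<not> (S t 1 \<and> S t (-1))" if "t = 1 \<or> t = -1" for t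
    using F2[of x 1 0 0 t 1 "-1"] x m that by (auto simp: S_def)
  have A: "R 1 1 \<or> S 1 1" "R 1 (-1) \<or> S (-1) 1" "R (-1) 1 \<or> S 1 (-1)" "R (-1) (-1) \<or> S (-1) (-1)"
    using f1 by auto
  have B: "\<not> (R 1 1 \<and> R 1 (-1))" "\<not> (R (-1) 1 \<and> R (-1) (-1))" "\<not> (S 1 1 \<and> S 1 (-1))" "\<not> (S (-1) 1 \<and> S (-1) (-1))"
    using f2 f3 by auto
  have "(R 1 1 \<and> S 1 (-1) \<and> R (-1) (-1) \<and> S (-1) 1) \<or> (R 1 (-1) \<and> S (-1) (-1) \<and> R (-1) 1 \<and> S 1 1)"
    using A B by blast
  thus ?thesis
  proof
    assume h: "R 1 1 \<and> S 1 (-1) \<and> R (-1) (-1) \<and> S (-1) 1"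
    show ?thesis by (rule exI[of _ 1]) (use h in \<open>simp add: R_def S_def algebra_simps\<close>)
  next
    assume h: "R 1 (-1) \<and> S (-1) (-1) \<and> R (-1) 1 \<and> S 1 1"
    show ?thesis by (rule exI[of _ "-1"]) (use h in \<open>simp add: R_def S_def algebra_simps\<close>)
  qed
qed

end


lemma nbrs2': "v \<in> vert 2 \<Longrightarrow> d = 1 \<or> d = -1 \<Longrightarrow> nbrs 2 v = {v + e 0 1, v + e 0 (-1), v + e 1 d, v + e 1 (-d)}"
  using nbrs2 by auto

context crc1n2 begin

lemma no4: assumes v: "v \<in> vert n" and d: "dc v = 4" shows False
proof -
  obtain z where z: "z \<in> C" "dc v = gdist n v z" using dcode_att[OF Cne] by blast
  obtain \<sigma> where s: "\<sigma> = 1 \<or> \<sigma> = -1" and c: "z + e 0 3 + e 1 \<sigma> \<in> C" "z + e 0 (-1) + e 1 (3*\<sigma>) \<in> C"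
     "z + e 0 (-3) + e 1 (-\<sigma>) \<in> C" "z + e 0 1 + e 1 (-3*\<sigma>) \<in> C"
    using pinwheel[OF z(1)] by blast
  have g4: "\<bar>v 0 - z 0\<bar> + \<bar>v 1 - z 1\<bar> = 4" using z d by (simp add: n2 gd2)
  have "\<bar>v 0 - (z 0 + 3)\<bar> + \<bar>v 1 - (z 1 + \<sigma>)\<bar> \<le> 2 \<or> \<bar>v 0 - (z 0 - 1)\<bar> + \<bar>v 1 - (z 1 + 3*\<sigma>)\<bar> \<le> 2 \<or>
        \<bar>v 0 - (z 0 - 3)\<bar> + \<bar>v 1 - (z 1 - \<sigma>)\<bar> \<le> 2 \<or> \<bar>v 0 - (z 0 + 1)\<bar> + \<bar>v 1 - (z 1 - 3*\<sigma>)\<bar> \<le> 2"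
    using g4 s by (smt (verit))
  hence "gdist n v (z + e 0 3 + e 1 \<sigma>) \<le> 2 \<or> gdist n v (z + e 0 (-1) + e 1 (3*\<sigma>)) \<le> 2 \<or>
     gdist n v (z + e 0 (-3) + e 1 (-\<sigma>)) \<le> 2 \<or> gdist n v (z + e 0 1 + e 1 (-3*\<sigma>)) \<le> 2"
    by (simp add: n2 gd2 nat_le_iff algebra_simps)
  thus False using dcode_le[OF c(1), of n v] dcode_le[OF c(2), of n v] dcode_le[OF c(3), of n v]
    dcode_le[OF c(4), of n v] d by linarith
qed

lemma rho3: "\<rho> = 3"
proof -
  have "\<rho> \<le> 3"
  proof (rule ccontr)
    assume "\<not> \<rho> \<le> 3"
    then obtain v where "v \<in> L 4" using layer_ex[of 4] by auto
    thus False using no4[of v] by (simp add: inL)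
  qed
  moreover have "3 \<le> \<rho>"
  proof -
    obtain x where x: "x \<in> C" using Cne by blast
    obtain \<sigma> where s: "\<sigma> = 1 \<or> \<sigma> = -1" and c: "x + e 0 3 + e 1 \<sigma> \<in> C" "x + e 0 (-1) + e 1 (3*\<sigma>) \<in> C"
      using pinwheel[OF x] by blast
    define v where "v = x + e 0 1 + e 1 (2*\<sigma>)"
    have xv: "x \<in> vert n" using x Cv by auto
    have vv: "v \<in> vert n" using xv n2 by (simp add: v_def vert_add)
    have "3 \<le> dc v"
    proof (rule ccontr)
      assume "\<not> 3 \<le> dc v"
      obtain y where y: "y \<in> C" "dc v = gdist n v y" using dcode_att[OF Cne] by blast
      have yl: "gdist n v y \<le> 2" using y \<open>\<not> 3 \<le> dc v\<close> by simp
      have f: "4 \<le> gdist n c y" if "c \<in> C" "gdist n v c = 3" for c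
      proof (rule sep[OF that(1) y(1)])
        show "c \<noteq> y" using that yl by auto
      qed
      have "4 \<le> gdist n x y" by (rule f[OF x]) (use s in \<open>auto simp: n2 gd2 v_def\<close>)
      moreover have "4 \<le> gdist n (x + e 0 3 + e 1 \<sigma>) y" by (rule f[OF c(1)]) (use s in \<open>auto simp: n2 gd2 v_def\<close>)
      moreover have "4 \<le> gdist n (x + e 0 (-1) + e 1 (3*\<sigma>)) y" by (rule f[OF c(2)]) (use s in \<open>auto simp: n2 gd2 v_def\<close>)
      ultimately have "4 \<le> \<bar>x 0 - y 0\<bar> + \<bar>x 1 - y 1\<bar>" "4 \<le> \<bar>x 0 + 3 - y 0\<bar> + \<bar>x 1 + \<sigma> - y 1\<bar>"
         "4 \<le> \<bar>x 0 - 1 - y 0\<bar> + \<bar>x 1 + 3*\<sigma> - y 1\<bar>"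
        by (simp_all add: n2 gd2 le_nat_iff algebra_simps)
      moreover have "\<bar>x 0 + 1 - y 0\<bar> + \<bar>x 1 + 2*\<sigma> - y 1\<bar> \<le> 2" using yl by (simp add: n2 gd2 v_def nat_le_iff algebra_simps)
      ultimately show False using s by (smt (verit))
    qed
    thus ?thesis using cov vv by (meson order.trans)
  qed
  ultimately show ?thesis by simp
qed

end


context crc1n2 begin

lemma L2_near: "w \<in> vert n \<Longrightarrow> v \<in> L 3 \<Longrightarrow> adj n v w \<Longrightarrow> c \<in> C \<Longrightarrow> gdist n w c \<le> 2 \<Longrightarrow> w \<in> L 2"
proof -
  assume a: "w \<in> vert n" "v \<in> L 3" "adj n v w" "c \<in> C" "gdist n w c \<le> 2"
  have "dc w \<le> 2" using dcode_le[OF a(4), of n w] a(5) by simp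
  moreover have "dc v \<le> dc w + 1" using lip2[of v w] a by (simp add: inL)
  ultimately show ?thesis using a by (simp add: inL)
qed

lemma deep:
  assumes x: "x \<in> C" and s: "\<sigma> = 1 \<or> \<sigma> = -1" and c: "x + e 0 3 + e 1 \<sigma> \<in> C" "x + e 0 (-1) + e 1 (3*\<sigma>) \<in> C"
  shows "x + e 0 1 + e 1 (2*\<sigma>) \<in> L 3"
proof -
  define v where "v = x + e 0 1 + e 1 (2*\<sigma>)"
  have xv: "x \<in> vert n" using x Cv by auto
  have vv: "v \<in> vert n" using xv n2 by (simp add: v_def vert_add)
  have "3 \<le> dc v"
  proof (rule ccontr)
    assume "\<not> 3 \<le> dc v"
    obtain y where y: "y \<in> C" "dc v = gdist n v y" using dcode_att[OF Cne] by blast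
    have yl: "gdist n v y \<le> 2" using y \<open>\<not> 3 \<le> dc v\<close> by simp
    have f: "4 \<le> gdist n c y" if "c \<in> C" "gdist n v c = 3" for c
    proof (rule sep[OF that(1) y(1)])
      show "c \<noteq> y" using that yl by auto
    qed
    have "4 \<le> gdist n x y" by (rule f[OF x]) (use s in \<open>auto simp: n2 gd2 v_def\<close>)
    moreover have "4 \<le> gdist n (x + e 0 3 + e 1 \<sigma>) y" by (rule f[OF c(1)]) (use s in \<open>auto simp: n2 gd2 v_def\<close>)
    moreover have "4 \<le> gdist n (x + e 0 (-1) + e 1 (3*\<sigma>)) y" by (rule f[OF c(2)]) (use s in \<open>auto simp: n2 gd2 v_def\<close>)
    ultimately have "4 \<le> \<bar>x 0 - y 0\<bar> + \<bar>x 1 - y 1\<bar>" "4 \<le> \<bar>x 0 + 3 - y 0\<bar> + \<bar>x 1 + \<sigma> - y 1\<bar>"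
       "4 \<le> \<bar>x 0 - 1 - y 0\<bar> + \<bar>x 1 + 3*\<sigma> - y 1\<bar>"
      by (simp_all add: n2 gd2 le_nat_iff algebra_simps)
    moreover have "\<bar>x 0 + 1 - y 0\<bar> + \<bar>x 1 + 2*\<sigma> - y 1\<bar> \<le> 2" using yl by (simp add: n2 gd2 v_def nat_le_iff algebra_simps)
    ultimately show False using s by (smt (verit))
  qed
  moreover have "dc v \<le> 3" using dcode_le[OF x, of n v] s by (auto simp: n2 gd2 v_def)
  ultimately show ?thesis using vv by (simp add: inL v_def)
qed

lemma matrix: "matrix_0413 \<rho> \<alpha>"
proof -
  obtain x where x: "x \<in> C" using Cne by blast
  obtain \<sigma> where s: "\<sigma> = 1 \<or> \<sigma> = -1" and c: "x + e 0 3 + e 1 \<sigma> \<in> C" "x + e 0 (-1) + e 1 (3*\<sigma>) \<in> C"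
    using pinwheel[OF x] by blast
  have s1: "\<bar>\<sigma>\<bar> = 1" "\<bar>-\<sigma>\<bar> = 1" using s by auto
  have xv: "x \<in> vert n" using x Cv by auto
  have m: "0 < n" "1 < n" using n2 by auto
  have r3: "\<rho> = 3" by (rule rho3)
  have A: "\<alpha> 0 1 = 4"
  proof -
    have xL: "x \<in> L 0" using x L0 by simp
    have "nbrs n x \<inter> L 1 = nbrs n x" using code_nbr[OF x] by (auto simp: nbrs_def)
    thus ?thesis using count[OF xL, of 1] card_nbrs2[of x] xv r3 n2 by simp
  qed
  have B: "\<alpha> 1 2 = 3"
  proof -
    define w where "w = x + e 0 1"
    have wL: "w \<in> L 1" using L1x[OF x m(1)] by (simp add: w_def)
    have wv: "w \<in> vert n" using wL by (simp add: inL)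
    have b1: "w + e 0 1 \<in> L 2"
    proof (rule L2_intro[OF wL vert_add[OF wv m(1)] adj_add[OF m(1)]])
      show "w + e 0 1 \<notin> C" using L2_1[where s=1 and t=1, OF x _ refl m(1) m(1)] by (auto simp: w_def)
    qed simp
    have b2: "w + e 1 1 \<in> L 2" using diag_L2[OF x _ m(1) m(2)] by (simp add: w_def)
    have b3: "w + e 1 (-1) \<in> L 2" using diag_L2[OF x _ m(1) m(2)] by (simp add: w_def)
    have "w + e 0 (-1) = x" by (auto simp: w_def fun_eq_iff)
    hence b4: "w + e 0 (-1) \<notin> L 2" using x xv dc0[of x] by (simp add: inL)
    have "nbrs n w \<inter> L 2 = {w + e 0 1, w + e 1 1, w + e 1 (-1)}"
      using nbrs2[of w] wv n2 b1 b2 b3 b4 by auto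
    moreover have "card {w + e 0 1, w + e 1 1, w + e 1 (-1)} = 3"
    proof -
      have "w + e 0 1 \<noteq> w + e 1 1" "w + e 0 1 \<noteq> w + e 1 (-1)" "w + e 1 1 \<noteq> w + e 1 (-1)"
        by (rule add_e_neq; simp)+
      thus ?thesis by simp
    qed
    ultimately show ?thesis using count[OF wL, of 2] r3 by simp
  qed
  define u where "u = x + e 0 1 + e 1 \<sigma>"
  define v where "v = x + e 0 1 + e 1 (2*\<sigma>)"
  have uL: "u \<in> L 2" using diag_L2[OF x _ m(1) m(2) _ s1(1)] by (simp add: u_def)
  have uv: "u \<in> vert n" using uL by (simp add: inL)
  have vL: "v \<in> L 3" using deep[OF x s c] by (simp add: v_def)
  have vv: "v \<in> vert n" using vL by (simp add: inL)
  have nu: "nbrs n u = {u + e 0 1, u + e 0 (-1), u + e 1 \<sigma>, u + e 1 (-\<sigma>)}" using nbrs2'[of u \<sigma>] uv s n2 by simp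
  have u1: "u + e 0 1 \<in> L 1"
    by (rule code_nbr2[where g=1, OF vert_add[OF uv m(1)] c(1) m(1)]) (auto simp: u_def fun_eq_iff)
  have u2: "u + e 0 (-1) \<in> L 1" by (rule L1x[OF x m(2) s1(1)]) (auto simp: u_def fun_eq_iff)
  have u3: "u + e 1 \<sigma> = v" by (auto simp: u_def v_def fun_eq_iff)
  have u4: "u + e 1 (-\<sigma>) \<in> L 1" by (rule L1x[OF x m(1), of 1]) (auto simp: u_def fun_eq_iff)
  have C1: "\<alpha> 2 2 = 0"
  proof -
    have "nbrs n u \<inter> L 2 = {}" using nu u1 u2 u3 u4 vL by (auto simp: inL)
    thus ?thesis using count[OF uL, of 2] r3 by simp
  qed
  have C2: "\<alpha> 2 3 = 1"
  proof -
    have "nbrs n u \<inter> L 3 = {v}" using nu u1 u2 u3 u4 vL by (auto simp: inL)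
    thus ?thesis using count[OF uL, of 3] r3 by simp
  qed
  have nv: "nbrs n v = {v + e 0 1, v + e 0 (-1), v + e 1 \<sigma>, v + e 1 (-\<sigma>)}" using nbrs2'[of v \<sigma>] vv s n2 by simp
  have v1: "v + e 0 1 \<in> L 2"
  proof (rule L2_near[OF vert_add[OF vv m(1)] vL adj_add[OF m(1)] c(1)])
    show "gdist n (v + e 0 1) (x + e 0 3 + e 1 \<sigma>) \<le> 2" using s by (auto simp: n2 gd2 v_def)
  qed simp
  have v2: "v + e 0 (-1) \<in> L 2"
  proof (rule L2_near[OF vert_add[OF vv m(1)] vL adj_add[OF m(1)] x])
    show "gdist n (v + e 0 (-1)) x \<le> 2" using s by (auto simp: n2 gd2 v_def)
  qed simp
  have v3: "v + e 1 \<sigma> \<in> L 2"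
  proof (rule L2_near[OF vert_add[OF vv m(2)] vL adj_add[OF m(2) s1(1)] c(2)])
    show "gdist n (v + e 1 \<sigma>) (x + e 0 (-1) + e 1 (3*\<sigma>)) \<le> 2" using s by (auto simp: n2 gd2 v_def)
  qed
  have v4: "v + e 1 (-\<sigma>) = u" by (auto simp: u_def v_def fun_eq_iff)
  have D1: "\<alpha> 3 2 = 4"
  proof -
    have "nbrs n v \<inter> L 2 = nbrs n v" using nv v1 v2 v3 v4 uL by auto
    thus ?thesis using count[OF vL, of 2] r3 card_nbrs2[OF vv[unfolded n2]] n2 by simp
  qed
  have D2: "\<alpha> 3 3 = 0"
  proof -
    have "nbrs n v \<inter> L 3 = {}" using nv v1 v2 v3 v4 uL by (auto simp: inL)
    thus ?thesis using count[OF vL, of 3] r3 by simp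
  qed
  show ?thesis unfolding matrix_0413_def using r3 A B C1 C2 D1 D2 a00 a11 c1 c2 by simp
qed

end


definition PP :: "(nat \<Rightarrow> int) set" where "PP = {v \<in> vert 2. (v 0 + 2 * v 1) mod 5 = 0}"
definition DD :: "int \<Rightarrow> int \<Rightarrow> nat" where
  "DD k p = (if k = 0 then (if p = 0 then 0 else 3) else (if p = 0 then 2 else 1))"
definition Dz :: "(nat \<Rightarrow> int) \<Rightarrow> nat" where "Dz v = DD ((v 0 + 2 * v 1) mod 5) ((v 0 + v 1) mod 2)"
definition \<alpha>3 :: "nat \<Rightarrow> nat \<Rightarrow> nat" where
  "\<alpha>3 i j = (if i = 0 \<and> j = 1 then 4 else if i = 1 \<and> j = 0 then 1 else if i = 1 \<and> j = 2 then 3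
     else if i = 2 \<and> j = 1 then 3 else if i = 2 \<and> j = 3 then 1 else if i = 3 \<and> j = 2 then 4 else 0)"

lemma ar_small: assumes "\<bar>d0\<bar> + \<bar>d1\<bar> \<le> (2::int)" "d0 + 2*d1 = 5*k" shows "d0 = 0 \<and> d1 = 0"
proof -
  have "\<bar>d0 + 2*d1\<bar> \<le> 4" using assms(1) by arith
  hence "\<bar>5*k\<bar> \<le> 4" using assms(2) by simp
  hence "k = 0" by arith
  hence "d0 = -2*d1" using assms(2) by simp
  thus ?thesis using assms(1) by arith
qed

lemma modh: "A = B + C \<Longrightarrow> A mod m = (B mod m + C) mod (m::int)"
  by (simp add: mod_add_left_eq)

lemma ar_l2: "c0 + 2*c1 = 5*k1 \<Longrightarrow> c0 + c1 = 2*m1 \<Longrightarrow> v0 + 2 * v1 = 5*(k2::int) \<Longrightarrow> v0 + v1 = 2*m2+1 \<Longrightarrow> 3 \<le> \<bar>v0 - c0\<bar> + \<bar>v1 - c1\<bar>"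
  by (smt (z3))
lemma ar_l3: "c0 + 2*c1 = 5*k1 \<Longrightarrow> c0 + c1 = 2*m1 \<Longrightarrow> v0 + 2 * v1 = 5*(k2::int) + j \<Longrightarrow> 1 \<le> j \<Longrightarrow> j \<le> 4 \<Longrightarrow> v0 + v1 = 2*m2 \<Longrightarrow> 2 \<le> \<bar>v0 - c0\<bar> + \<bar>v1 - c1\<bar>"
  by (smt (z3))
lemma ar_l4: "c0 + 2*c1 = 5*k1 \<Longrightarrow> v0 + 2 * v1 = 5*(k2::int) + j \<Longrightarrow> 1 \<le> j \<Longrightarrow> j \<le> 4 \<Longrightarrow> 1 \<le> \<bar>v0 - c0\<bar> + \<bar>v1 - c1\<bar>"
  by (smt (z3))

lemma weight_even: "even (weight 2 x) \<longleftrightarrow> (x 0 + x 1) mod 2 = 0"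
proof -
  have "weight 2 x = nat (\<bar>x 0\<bar> + \<bar>x 1\<bar>)" by (simp add: weight_def numeral_2_eq_2 lessThan_Suc)
  hence "even (weight 2 x) \<longleftrightarrow> even (\<bar>x 0\<bar> + \<bar>x 1\<bar>)" by (simp add: even_nat_iff)
  also have "\<dots> \<longleftrightarrow> even (x 0 + x 1)" by (simp add: abs_if)
  finally show ?thesis by (simp add: even_iff_mod_2_eq_zero)
qed

lemma mem_CE: "v \<in> {x \<in> PP. even (weight 2 x)} \<longleftrightarrow> v \<in> vert 2 \<and> (v 0 + 2 * v 1) mod 5 = 0 \<and> (v 0 + v 1) mod 2 = 0"
  by (auto simp: PP_def weight_even)

lemma vert2_eq: "u \<in> vert 2 \<Longrightarrow> v \<in> vert 2 \<Longrightarrow> u 0 = v 0 \<Longrightarrow> u 1 = v 1 \<Longrightarrow> u = v"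
proof
  fix k assume a: "u \<in> vert 2" "v \<in> vert 2" "u 0 = v 0" "u 1 = v 1"
  show "u k = v k"
  proof (cases "k < 2")
    case True hence "k = 0 \<or> k = 1" by auto
    thus ?thesis using a by auto
  next
    case False thus ?thesis using a by (simp add: vert_def)
  qed
qed

abbreviation CE where "CE \<equiv> {x \<in> PP. even (weight 2 x)}"

lemma CE_lower: assumes v: "v \<in> vert 2" and c: "c \<in> CE" shows "Dz v \<le> gdist 2 v c"
proof -
  have c1: "(c 0 + 2 * c 1) mod 5 = 0" "(c 0 + c 1) mod 2 = 0" using c by (auto simp: PP_def weight_even)
  obtain k1 where k1: "c 0 + 2 * c 1 = 5 * k1" using c1(1) by (metis mod_eq_0_iff_dvd dvd_def)
  obtain m1 where m1: "c 0 + c 1 = 2 * m1" using c1(2) by (metis mod_eq_0_iff_dvd dvd_def)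
  define k where "k = (v 0 + 2 * v 1) mod 5"
  define p where "p = (v 0 + v 1) mod 2"
  have kq: "v 0 + 2 * v 1 = 5 * ((v 0 + 2 * v 1) div 5) + k" by (simp add: k_def)
  have pq: "v 0 + v 1 = 2 * ((v 0 + v 1) div 2) + p" by (simp add: p_def)
  have kr: "0 \<le> k" "k \<le> 4" by (auto simp: k_def)
  have pr: "p = 0 \<or> p = 1" by (auto simp: p_def)
  have g: "gdist 2 v c = nat (\<bar>v 0 - c 0\<bar> + \<bar>v 1 - c 1\<bar>)" by (simp add: gd2)
  have Dv: "Dz v = DD k p" by (simp add: Dz_def k_def p_def)
  show ?thesis
  proof (cases "k = 0")
    case True
    show ?thesis
    proof (cases "p = 0")
      case True thus ?thesis using \<open>k = 0\<close> Dv by (simp add: DD_def)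
    next
      case False
      hence "p = 1" using pr by simp
      hence "3 \<le> \<bar>v 0 - c 0\<bar> + \<bar>v 1 - c 1\<bar>" using ar_l2[OF k1 m1, of "v 0" "v 1"] kq pq \<open>k = 0\<close> by simp
      thus ?thesis using \<open>k = 0\<close> \<open>p = 1\<close> g by (simp add: Dv DD_def le_nat_iff)
    qed
  next
    case False
    hence kr': "1 \<le> k" using kr by simp
    show ?thesis
    proof (cases "p = 0")
      case True
      hence "2 \<le> \<bar>v 0 - c 0\<bar> + \<bar>v 1 - c 1\<bar>" using ar_l3[OF k1 m1 kq kr' kr(2)] pq by simp
      thus ?thesis using \<open>k \<noteq> 0\<close> \<open>p = 0\<close> g by (simp add: Dv DD_def le_nat_iff)
    next
      case False
      hence "1 \<le> \<bar>v 0 - c 0\<bar> + \<bar>v 1 - c 1\<bar>" using ar_l4[OF k1 kq kr' kr(2)] by simp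
      thus ?thesis using \<open>k \<noteq> 0\<close> \<open>p \<noteq> 0\<close> g by (simp add: Dv DD_def le_nat_iff)
    qed
  qed
qed


lemma key: assumes "0 \<le> k" "k \<le> 4" "p = 0 \<or> p = 1"
  shows "\<exists>a b. (k + a + 2*b) mod 5 = 0 \<and> (p + a + b) mod 2 = 0 \<and> nat (\<bar>a\<bar> + \<bar>b\<bar>) = DD k p"
proof -
  have "k = 0 \<or> k = 1 \<or> k = 2 \<or> k = 3 \<or> k = 4" using assms by auto
  thus ?thesis using assms(3)
  proof (elim disjE)
    assume "k = 0" "p = 0" thus ?thesis by (intro exI[of _ 0]) (simp add: DD_def)
  next assume "k = 0" "p = 1" thus ?thesis by (intro exI[of _ 1] exI[of _ 2]) (simp add: DD_def)
  next assume "k = 1" "p = 0" thus ?thesis by (intro exI[of _ 0] exI[of _ 2]) (simp add: DD_def)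
  next assume "k = 1" "p = 1" thus ?thesis by (intro exI[of _ "-1"] exI[of _ 0]) (simp add: DD_def)
  next assume "k = 2" "p = 0" thus ?thesis by (intro exI[of _ 1] exI[of _ 1]) (simp add: DD_def)
  next assume "k = 2" "p = 1" thus ?thesis by (intro exI[of _ 0] exI[of _ "-1"]) (simp add: DD_def)
  next assume "k = 3" "p = 0" thus ?thesis by (intro exI[of _ 2] exI[of _ 0]) (simp add: DD_def)
  next assume "k = 3" "p = 1" thus ?thesis by (intro exI[of _ 0] exI[of _ 1]) (simp add: DD_def)
  next assume "k = 4" "p = 0" thus ?thesis by (intro exI[of _ "-1"] exI[of _ 1]) (simp add: DD_def)
  next assume "k = 4" "p = 1" thus ?thesis by (intro exI[of _ 1] exI[of _ 0]) (simp add: DD_def)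
  qed
qed

lemma Dz_shift: "Dz (v + e 0 a + e 1 b) = DD (((v 0 + 2*v 1) mod 5 + (a + 2*b)) mod 5) (((v 0 + v 1) mod 2 + (a + b)) mod 2)"
proof -
  have 1: "(v 0 + a + 2 * (v 1 + b)) mod 5 = ((v 0 + 2*v 1) mod 5 + (a + 2*b)) mod 5" by (rule modh) simp
  have 2: "(v 0 + a + (v 1 + b)) mod 2 = ((v 0 + v 1) mod 2 + (a + b)) mod 2" by (rule modh) simp
  show ?thesis unfolding Dz_def using 1 2 by simp
qed

lemma CE_upper: assumes v: "v \<in> vert 2" shows "\<exists>c\<in>CE. gdist 2 v c = Dz v"
proof -
  define k where "k = (v 0 + 2 * v 1) mod 5"
  define p where "p = (v 0 + v 1) mod 2"
  have kk: "0 \<le> k" "k \<le> 4" "p = 0 \<or> p = 1" by (auto simp: k_def p_def)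
  obtain a b where ab: "(k + a + 2*b) mod 5 = 0" "(p + a + b) mod 2 = 0" "nat (\<bar>a\<bar> + \<bar>b\<bar>) = DD k p"
    using key[OF kk] by metis
  define c where "c = v + e 0 a + e 1 b"
  have cv: "c \<in> vert 2" using v by (simp add: c_def vert_add)
  have m5: "(c 0 + 2 * c 1) mod 5 = 0"
  proof -
    have "(c 0 + 2 * c 1) mod 5 = ((v 0 + 2 * v 1) mod 5 + (a + 2*b)) mod 5" by (rule modh) (simp add: c_def)
    thus ?thesis using ab(1) unfolding k_def by (simp add: add.assoc)
  qed
  have m2: "(c 0 + c 1) mod 2 = 0"
  proof -
    have "(c 0 + c 1) mod 2 = ((v 0 + v 1) mod 2 + (a + b)) mod 2" by (rule modh) (simp add: c_def)
    thus ?thesis using ab(2) unfolding p_def by (simp add: add.assoc)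
  qed
  have "c \<in> CE" using m5 m2 cv by (simp add: PP_def weight_even)
  moreover have "gdist 2 v c = nat (\<bar>a\<bar> + \<bar>b\<bar>)" by (simp add: gd2 c_def)
  moreover have "Dz v = DD k p" by (simp add: Dz_def k_def p_def)
  ultimately show ?thesis using ab(3) by auto
qed

lemma CE_ne: "CE \<noteq> {}"
proof -
  have "(\<lambda>_. 0) \<in> CE" by (simp add: PP_def weight_even vert_def)
  thus ?thesis by blast
qed

lemma dcode_CE: assumes v: "v \<in> vert 2" shows "dcode 2 CE v = Dz v"
proof -
  obtain c where c: "c \<in> CE" "gdist 2 v c = Dz v" using CE_upper[OF v] by blast
  have "dcode 2 CE v \<le> Dz v" using dcode_le[OF c(1), of 2 v] c(2) by simp
  moreover obtain c' where c': "c' \<in> CE" "dcode 2 CE v = gdist 2 v c'" using dcode_att[OF CE_ne] by blast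
  have "Dz v \<le> dcode 2 CE v" using CE_lower[OF v c'(1)] c'(2) by simp
  ultimately show ?thesis by simp
qed

lemma filt_ins: "{u \<in> insert a A. P u} = (if P a then insert a {u \<in> A. P u} else {u \<in> A. P u})" by auto

lemma card_filter4:
  assumes "a \<noteq> b" "a \<noteq> c" "a \<noteq> d" "b \<noteq> c" "b \<noteq> d" "c \<noteq> d"
  shows "card {u \<in> {a,b,c,d}. P u} = (if P a then 1 else 0) + (if P b then 1 else 0) + (if P c then 1 else 0) + (if P d then 1 else (0::nat))"
  unfolding filt_ins using assms by (simp add: card_insert_if)

lemma ident: assumes "0 \<le> k" "k \<le> 4" "p = 0 \<or> p = 1" "j \<le> 3"
  shows "(if DD ((k+1) mod 5) ((p+1) mod 2) = j then 1 else 0) + (if DD ((k-1) mod 5) ((p-1) mod 2) = j then 1 else 0)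
    + (if DD ((k+2) mod 5) ((p+1) mod 2) = j then 1 else 0) + (if DD ((k-2) mod 5) ((p-1) mod 2) = j then 1 else 0)
    = \<alpha>3 (DD k p) j"
proof -
  have "k = 0 \<or> k = 1 \<or> k = 2 \<or> k = 3 \<or> k = 4" using assms by auto
  moreover have "j = 0 \<or> j = 1 \<or> j = 2 \<or> j = 3" using assms by auto
  ultimately show ?thesis using assms(3) by (elim disjE) (simp_all add: DD_def \<alpha>3_def)
qed

lemma count_CE: assumes v: "v \<in> vert 2" and j: "j \<le> 3"
  shows "card {u \<in> vert 2. adj 2 v u \<and> u \<in> layer 2 CE j} = \<alpha>3 (Dz v) j"
proof -
  define k where "k = (v 0 + 2 * v 1) mod 5"
  define p where "p = (v 0 + v 1) mod 2"
  have kp: "0 \<le> k" "k \<le> 4" "p = 0 \<or> p = 1" by (auto simp: k_def p_def)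
  have "{u \<in> vert 2. adj 2 v u \<and> u \<in> layer 2 CE j} = {u \<in> nbrs 2 v. Dz u = j}"
    by (auto simp: nbrs_def layer_def dcode_CE)
  also have "\<dots> = {u \<in> {v + e 0 1, v + e 0 (-1), v + e 1 1, v + e 1 (-1)}. Dz u = j}"
    using nbrs2[OF v] by simp
  finally have S: "{u \<in> vert 2. adj 2 v u \<and> u \<in> layer 2 CE j} = {u \<in> {v + e 0 1, v + e 0 (-1), v + e 1 1, v + e 1 (-1)}. Dz u = j}" .
  have d: "v + e 0 1 \<noteq> v + e 0 (-1)" "v + e 0 1 \<noteq> v + e 1 1" "v + e 0 1 \<noteq> v + e 1 (-1)"
    "v + e 0 (-1) \<noteq> v + e 1 1" "v + e 0 (-1) \<noteq> v + e 1 (-1)" "v + e 1 1 \<noteq> v + e 1 (-1)"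
    by (rule add_e_neq; simp)+
  have E: "v + e 0 1 = v + e 0 1 + e 1 0" "v + e 0 (-1) = v + e 0 (-1) + e 1 0"
    "v + e 1 1 = v + e 0 0 + e 1 1" "v + e 1 (-1) = v + e 0 0 + e 1 (-1)" by (auto simp: fun_eq_iff)
  have D1: "Dz (v + e 0 1) = DD ((k+1) mod 5) ((p+1) mod 2)"
    using Dz_shift[of v 1 0] E(1) by (simp add: k_def p_def)
  have D2: "Dz (v + e 0 (-1)) = DD ((k-1) mod 5) ((p-1) mod 2)"
    using Dz_shift[of v "-1" 0] E(2) by (simp add: k_def p_def)
  have D3: "Dz (v + e 1 1) = DD ((k+2) mod 5) ((p+1) mod 2)"
    using Dz_shift[of v 0 1] E(3) by (simp add: k_def p_def)
  have D4: "Dz (v + e 1 (-1)) = DD ((k-2) mod 5) ((p-1) mod 2)"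
    using Dz_shift[of v 0 "-1"] E(4) by (simp add: k_def p_def)
  have "Dz v = DD k p" by (simp add: Dz_def k_def p_def)
  thus ?thesis unfolding S card_filter4[OF d] D1 D2 D3 D4 using ident[OF kp j] by simp
qed


lemma key1: assumes "0 \<le> k" "k \<le> (4::int)"
  shows "\<exists>a b. (k + a + 2*b) mod 5 = 0 \<and> \<bar>a\<bar> + \<bar>b\<bar> \<le> 1"
proof -
  have "k = 0 \<or> k = 1 \<or> k = 2 \<or> k = 3 \<or> k = 4" using assms by auto
  thus ?thesis
  proof (elim disjE)
    assume "k = 0" thus ?thesis by (intro exI[of _ 0]) simp
  next assume "k = 1" thus ?thesis by (intro exI[of _ "-1"] exI[of _ 0]) simp
  next assume "k = 2" thus ?thesis by (intro exI[of _ 0] exI[of _ "-1"]) simp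
  next assume "k = 3" thus ?thesis by (intro exI[of _ 0] exI[of _ 1]) simp
  next assume "k = 4" thus ?thesis by (intro exI[of _ 1] exI[of _ 0]) simp
  qed
qed

lemma PP_perfect: "perfect_code 2 PP"
  unfolding perfect_code_def
proof (intro conjI ballI)
  show "PP \<subseteq> vert 2" by (auto simp: PP_def)
  fix v assume v: "v \<in> vert 2"
  define k where "k = (v 0 + 2 * v 1) mod 5"
  have kk: "0 \<le> k" "k \<le> 4" by (auto simp: k_def)
  obtain a b where ab: "(k + a + 2*b) mod 5 = 0" "\<bar>a\<bar> + \<bar>b\<bar> \<le> 1" using key1[OF kk] by metis
  define c where "c = v + e 0 a + e 1 b"
  have cv: "c \<in> vert 2" using v by (simp add: c_def vert_add)
  have "(c 0 + 2 * c 1) mod 5 = ((v 0 + 2 * v 1) mod 5 + (a + 2*b)) mod 5" by (rule modh) (simp add: c_def)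
  hence "(c 0 + 2 * c 1) mod 5 = 0" using ab(1) unfolding k_def by (simp add: add.assoc)
  hence cP: "c \<in> PP" using cv by (simp add: PP_def)
  have cg: "gdist 2 v c \<le> 1" using ab(2) by (simp add: gd2 c_def nat_le_iff)
  show "\<exists>!u. u \<in> PP \<and> gdist 2 v u \<le> 1"
  proof (rule ex1I[of _ c])
    show "c \<in> PP \<and> gdist 2 v c \<le> 1" using cP cg by simp
    fix u assume u: "u \<in> PP \<and> gdist 2 v u \<le> 1"
    have uv: "u \<in> vert 2" using u by (simp add: PP_def)
    have "gdist 2 u c \<le> gdist 2 u v + gdist 2 v c" by (rule gdist_triangle)
    hence g2: "gdist 2 u c \<le> 2" using u cg gdist_sym[of 2 u v] by simp
    have "(u 0 + 2 * u 1) mod 5 = 0" "(c 0 + 2 * c 1) mod 5 = 0" using u cP by (auto simp: PP_def)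
    hence "5 dvd ((u 0 - c 0) + 2 * (u 1 - c 1))" by (simp add: mod_eq_0_iff_dvd algebra_simps dvd_diff)
    then obtain q where q: "(u 0 - c 0) + 2 * (u 1 - c 1) = 5 * q" by (auto simp: dvd_def)
    have "\<bar>u 0 - c 0\<bar> + \<bar>u 1 - c 1\<bar> \<le> 2" using g2 by (simp add: gd2 nat_le_iff)
    hence "u 0 - c 0 = 0 \<and> u 1 - c 1 = 0" using ar_small q by blast
    thus "u = c" using vert2_eq[OF uv cv] by simp
  qed
qed

lemma CE_CRC: "is_CRC 2 CE 3 \<alpha>3"
  unfolding is_CRC_def covering_radius_def
proof (intro conjI)
  show "CE \<noteq> {}" by (rule CE_ne)
  show "CE \<subseteq> vert 2" by (auto simp: PP_def)
  show "\<forall>v\<in>vert 2. dcode 2 CE v \<le> 3"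
  proof
    fix v :: "nat \<Rightarrow> int" assume v: "v \<in> vert 2"
    have "Dz v \<le> 3" by (simp add: Dz_def DD_def)
    thus "dcode 2 CE v \<le> 3" unfolding dcode_CE[OF v] .
  qed
  define v :: "nat \<Rightarrow> int" where "v = e 0 1 + e 1 2"
  have vv: "v \<in> vert 2" by (simp add: v_def vert_def)
  have "Dz v = 3" by (simp add: Dz_def DD_def v_def)
  hence "dcode 2 CE v = 3" unfolding dcode_CE[OF vv] .
  thus "\<exists>v\<in>vert 2. dcode 2 CE v = 3" using vv by blast
  show "\<forall>i\<le>3. \<forall>j\<le>3. \<forall>v\<in>layer 2 CE i. card {u \<in> vert 2. adj 2 v u \<and> u \<in> layer 2 CE j} = \<alpha>3 i j"
  proof (intro allI impI ballI)
    fix i j v assume "i \<le> 3" "j \<le> (3::nat)" and v: "v \<in> layer 2 CE i"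
    have vv: "v \<in> vert 2" and "dcode 2 CE v = i" using v unfolding layer_def by auto
    hence "Dz v = i" using dcode_CE[OF vv] by metis
    thus "card {u \<in> vert 2. adj 2 v u \<and> u \<in> layer 2 CE j} = \<alpha>3 i j" using count_CE[OF vv \<open>j \<le> 3\<close>] by simp
  qed
  show "\<forall>i\<le>3. \<forall>j\<le>3. i > j + 1 \<or> j > i + 1 \<longrightarrow> \<alpha>3 i j = 0" by (auto simp: \<alpha>3_def)
qed

lemma M3: "matrix_0413 3 \<alpha>3" by (simp add: matrix_0413_def \<alpha>3_def)

theorem mainTheorem5:
  shows "(\<forall>n\<ge>1. (\<exists>C \<rho> \<alpha>. is_CRC n C \<rho> \<alpha> \<and> r_null 2 \<alpha> \<and> 2 \<le> \<rho> \<and>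
                          \<alpha> 1 0 = 1 \<and> \<alpha> 2 1 = 3) \<longleftrightarrow> n = 2)
     \<and> (\<forall>C \<rho> \<alpha>. is_CRC 2 C \<rho> \<alpha> \<and> r_null 2 \<alpha> \<and> 2 \<le> \<rho> \<and>
                  \<alpha> 1 0 = 1 \<and> \<alpha> 2 1 = 3 \<longrightarrow> matrix_0413 \<rho> \<alpha>)
     \<and> (\<exists>P \<alpha>. perfect_code 2 P \<and>
           is_CRC 2 {x \<in> P. even (weight 2 x)} 3 \<alpha> \<and> matrix_0413 3 \<alpha>)
     \<and> (\<forall>n\<ge>1. \<not> (\<exists>C \<rho> \<alpha>. is_CRC n C \<rho> \<alpha> \<and> r_null 2 \<alpha> \<and> 2 \<le> \<rho> \<and>
                          \<alpha> 1 0 = 2 \<and> \<alpha> 2 1 = 3))"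
proof (intro conjI allI impI)
  fix n :: nat assume n1: "1 \<le> n"
  show "(\<exists>C \<rho> \<alpha>. is_CRC n C \<rho> \<alpha> \<and> r_null 2 \<alpha> \<and> 2 \<le> \<rho> \<and> \<alpha> 1 0 = 1 \<and> \<alpha> 2 1 = 3) \<longleftrightarrow> n = 2"
  proof
    assume "\<exists>C \<rho> \<alpha>. is_CRC n C \<rho> \<alpha> \<and> r_null 2 \<alpha> \<and> 2 \<le> \<rho> \<and> \<alpha> 1 0 = 1 \<and> \<alpha> 2 1 = 3"
    then obtain C \<rho> \<alpha> where h: "is_CRC n C \<rho> \<alpha>" "r_null 2 \<alpha>" "2 \<le> \<rho>" "\<alpha> 1 0 = 1" "\<alpha> 2 1 = 3" by blast
    interpret crc1 n C \<rho> \<alpha> by unfold_locales (use h in auto)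
    show "n = 2"
    proof (rule ccontr)
      assume "n \<noteq> 2"
      hence "n = 1 \<or> 3 \<le> n" using n1 by auto
      thus False using n1_false n3_false h(5) by blast
    qed
  next
    assume "n = 2"
    moreover have "r_null 2 \<alpha>3" by (simp add: r_null_def \<alpha>3_def less_2_cases_iff)
    ultimately show "\<exists>C \<rho> \<alpha>. is_CRC n C \<rho> \<alpha> \<and> r_null 2 \<alpha> \<and> 2 \<le> \<rho> \<and> \<alpha> 1 0 = 1 \<and> \<alpha> 2 1 = 3"
      using CE_CRC by (intro exI[of _ CE] exI[of _ 3] exI[of _ \<alpha>3]) (simp add: \<alpha>3_def)
  qed
next
  fix C \<rho> \<alpha> assume h: "is_CRC 2 C \<rho> \<alpha> \<and> r_null 2 \<alpha> \<and> 2 \<le> \<rho> \<and> \<alpha> 1 0 = 1 \<and> \<alpha> 2 1 = 3"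
  interpret crc1n2 2 C \<rho> \<alpha> by unfold_locales (use h in auto)
  show "matrix_0413 \<rho> \<alpha>" by (rule matrix)
next
  show "\<exists>P \<alpha>. perfect_code 2 P \<and> is_CRC 2 {x \<in> P. even (weight 2 x)} 3 \<alpha> \<and> matrix_0413 3 \<alpha>"
    using PP_perfect CE_CRC M3 by blast
next
  fix n :: nat assume n1: "1 \<le> n"
  show "\<not> (\<exists>C \<rho> \<alpha>. is_CRC n C \<rho> \<alpha> \<and> r_null 2 \<alpha> \<and> 2 \<le> \<rho> \<and> \<alpha> 1 0 = 2 \<and> \<alpha> 2 1 = 3)"
  proof
    assume "\<exists>C \<rho> \<alpha>. is_CRC n C \<rho> \<alpha> \<and> r_null 2 \<alpha> \<and> 2 \<le> \<rho> \<and> \<alpha> 1 0 = 2 \<and> \<alpha> 2 1 = 3"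
    then obtain C \<rho> \<alpha> where h: "is_CRC n C \<rho> \<alpha>" "r_null 2 \<alpha>" "2 \<le> \<rho>" "\<alpha> 1 0 = 2" "\<alpha> 2 1 = 3" by blast
    interpret crc2 n C \<rho> \<alpha> by unfold_locales (use h in auto)
    show False using false_any n1 by blast
  qed
qed


end
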